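(* Let $\Sigma\subset\mathbf{R}^{n+1}$ be a translating soliton with translation vector $T$, let $V$ be the tangential part of $T$ along $\Sigma$, and let $u:\Sigma\to\mathbf{S}^n$ be its Gauss map, which satisfies $\tau(u)=-du(V)$. Then $$\Delta|\nabla u|^2=2|\nabla du|^2-2|\nabla u|^4-\langle V,\nabla|\nabla u|^2\rangle .$$
   Context: $\Sigma$ is a smooth immersed $n$-dimensional hypersurface ($n\ge2$) in $\mathbf{R}^{n+1}$ with induced metric $g$, outer unit normal $\vec\nu$, and mean curvature $H$ with respect to $\vec\nu$ (mean curvature vector $-H\vec\nu$). It is a translating soliton with translation vector $T$ (a constant vector in $\mathbf{R}^{n+1}$) if $\langle T,\vec\nu\rangle=-H$ on $\Sigma$. The Gauss map is $u(p)=\vec\nu(p)\in\mathbf{S}^n$ (round unit sphere). $\nabla$, $\Delta$ denote gradient/connection and Laplacian on $\Sigma$ with respect to $g$ (with the induced connection on $u^{-1}T\mathbf{S}^n$), $|\nabla u|^2$ is the energy density of $u$, $\nabla du$ is the second fundamental form of the map $u$, and $\tau(u)=\mathrm{Tr}_g\nabla du$ is its tension field. *)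

theory Defs
  imports "HOL-Analysis.Analysis"
begin

text \<open>Local-coordinate setting: an immersion X of an open set U of R^n into R^(n+1)
 (index types 'n and 'm), with unit normal field nu. All geometric quantities are written
 in coordinates.\<close>

definition pd :: "'n::finite \<Rightarrow> (real^'n \<Rightarrow> 'a::real_normed_vector) \<Rightarrow> real^'n \<Rightarrow> 'a" where
  "pd i f x = frechet_derivative f (at x) (axis i 1)"

fun pdl :: "'n::finite list \<Rightarrow> (real^'n \<Rightarrow> 'a::real_normed_vector) \<Rightarrow> real^'n \<Rightarrow> 'a" where
  "pdl [] f = f"
| "pdl (i # is) f = pd i (pdl is f)"

definition smooth_on :: "(real^'n::finite) set \<Rightarrow> (real^'n \<Rightarrow> 'a::real_normed_vector) \<Rightarrow> bool" where
  "smooth_on U f \<longleftrightarrow> (\<forall>is. pdl is f differentiable_on U)"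

definition metric :: "(real^'n::finite \<Rightarrow> real^'m::finite) \<Rightarrow> real^'n \<Rightarrow> 'n \<Rightarrow> 'n \<Rightarrow> real" where
  "metric X p i j = pd i X p \<bullet> pd j X p"

definition ginv :: "(real^'n::finite \<Rightarrow> real^'m::finite) \<Rightarrow> real^'n \<Rightarrow> 'n \<Rightarrow> 'n \<Rightarrow> real" where
  "ginv X p i j = matrix_inv (\<chi> a b. metric X p a b) $ i $ j"

definition christoffel :: "(real^'n::finite \<Rightarrow> real^'m::finite) \<Rightarrow> real^'n \<Rightarrow> 'n \<Rightarrow> 'n \<Rightarrow> 'n \<Rightarrow> real" where
  "christoffel X p k i j = (\<Sum>l\<in>UNIV. ginv X p k l * (pd i (pd j X) p \<bullet> pd l X p))"

definition hess_fun :: "(real^'n::finite \<Rightarrow> real^'m::finite) \<Rightarrow> (real^'n \<Rightarrow> real) \<Rightarrow> real^'n \<Rightarrow> 'n \<Rightarrow> 'n \<Rightarrow> real" where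
  "hess_fun X f p i j = pd i (pd j f) p - (\<Sum>k\<in>UNIV. christoffel X p k i j * pd k f p)"

definition laplacian :: "(real^'n::finite \<Rightarrow> real^'m::finite) \<Rightarrow> (real^'n \<Rightarrow> real) \<Rightarrow> real^'n \<Rightarrow> real" where
  "laplacian X f p = (\<Sum>i\<in>UNIV. \<Sum>j\<in>UNIV. ginv X p i j * hess_fun X f p i j)"

text \<open>Mean curvature with respect to nu (mean curvature vector -H nu): H = div_Sigma nu.\<close>
definition mean_curv :: "(real^'n::finite \<Rightarrow> real^'m::finite) \<Rightarrow> (real^'n \<Rightarrow> real^'m) \<Rightarrow> real^'n \<Rightarrow> real" where
  "mean_curv X nu p = (\<Sum>i\<in>UNIV. \<Sum>j\<in>UNIV. ginv X p i j * (pd i nu p \<bullet> pd j X p))"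

definition energy_density :: "(real^'n::finite \<Rightarrow> real^'m::finite) \<Rightarrow> (real^'n \<Rightarrow> real^'m) \<Rightarrow> real^'n \<Rightarrow> real" where
  "energy_density X u p = (\<Sum>i\<in>UNIV. \<Sum>j\<in>UNIV. ginv X p i j * (pd i u p \<bullet> pd j u p))"

text \<open>Second fundamental form (nabla du)(d_i, d_j) of a map u into S^n subset R^(n+1):
 tangential projection (onto T_{u(p)} S^n = u(p)^perp) of the ambient second derivative,
 minus du of the Levi-Civita connection.\<close>
definition sff_map :: "(real^'n::finite \<Rightarrow> real^'m::finite) \<Rightarrow> (real^'n \<Rightarrow> real^'m) \<Rightarrow> real^'n \<Rightarrow> 'n \<Rightarrow> 'n \<Rightarrow> real^'m" where
  "sff_map X u p i j =
     (let w = pd i (pd j u) p in w - (w \<bullet> u p) *\<^sub>R u p)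
     - (\<Sum>k\<in>UNIV. christoffel X p k i j *\<^sub>R pd k u p)"

definition sff_map_norm2 :: "(real^'n::finite \<Rightarrow> real^'m::finite) \<Rightarrow> (real^'n \<Rightarrow> real^'m) \<Rightarrow> real^'n \<Rightarrow> real" where
  "sff_map_norm2 X u p = (\<Sum>i\<in>UNIV. \<Sum>j\<in>UNIV. \<Sum>k\<in>UNIV. \<Sum>l\<in>UNIV.
      ginv X p i k * ginv X p j l * (sff_map X u p i j \<bullet> sff_map X u p k l))"

definition tangential_part :: "(real^'n::finite \<Rightarrow> real^'m::finite) \<Rightarrow> real^'m \<Rightarrow> real^'n \<Rightarrow> real^'m" where
  "tangential_part X T p = (\<Sum>k\<in>UNIV. \<Sum>l\<in>UNIV. (ginv X p k l * (T \<bullet> pd k X p)) *\<^sub>R pd l X p)"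

definition grad_fun :: "(real^'n::finite \<Rightarrow> real^'m::finite) \<Rightarrow> (real^'n \<Rightarrow> real) \<Rightarrow> real^'n \<Rightarrow> real^'m" where
  "grad_fun X f p = (\<Sum>i\<in>UNIV. \<Sum>j\<in>UNIV. (ginv X p i j * pd j f p) *\<^sub>R pd i X p)"

end

theory Submission
  imports Defs
begin


lemma pd_local:
  assumes "open U" "x \<in> U" "\<forall>y\<in>U. f y = g y"
  shows "pd i f x = pd i g x"
proof -
  have "(\<lambda>f'. (f has_derivative f') (at x)) = (\<lambda>f'. (g has_derivative f') (at x))"
  proof (rule ext, rule iffI)
    fix f' assume "(f has_derivative f') (at x)"
    then show "(g has_derivative f') (at x)"
      by (rule has_derivative_transform_within_open[OF _ assms(1,2)]) (use assms(3) in auto)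
  next
    fix f' assume "(g has_derivative f') (at x)"
    then show "(f has_derivative f') (at x)"
      by (rule has_derivative_transform_within_open[OF _ assms(1,2)]) (use assms(3) in auto)
  qed
  then show ?thesis unfolding pd_def frechet_derivative_def by simp
qed

lemma pdl_local:
  assumes "open U" "\<forall>y\<in>U. f y = g y"
  shows "\<forall>x\<in>U. pdl is f x = pdl is g x"
  using assms by (induction "is") (auto intro: pd_local)

lemma diff_on_cong:
  assumes "open U" "\<forall>y\<in>U. f y = g y" "f differentiable_on U"
  shows "g differentiable_on U"
  using assms unfolding differentiable_on_eq_differentiable_at[OF assms(1)] differentiable_def
  by (meson has_derivative_transform_within_open)

lemma pd_eq:
  assumes "(f has_derivative F) (at x)"
  shows "pd i f x = F (axis i 1)"
  using frechet_derivative_at[OF assms] unfolding pd_def by simp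

lemma pd_has:
  assumes "f differentiable at x"
  shows "(f has_derivative (\<lambda>h. frechet_derivative f (at x) h)) (at x)"
  using assms frechet_derivative_works by auto

lemma pdl_snoc: "pdl (is @ [i]) f = pdl is (pd i f)"
  by (induction "is") auto

definition su :: "nat \<Rightarrow> (real^'n::finite) set \<Rightarrow> (real^'n \<Rightarrow> 'a::real_normed_vector) \<Rightarrow> bool" where
  "su n U f \<longleftrightarrow> (\<forall>is. length is \<le> n \<longrightarrow> pdl is f differentiable_on U)"

lemma su_0: "su 0 U f \<longleftrightarrow> f differentiable_on U"
  unfolding su_def by auto

lemma su_Suc: "su (Suc n) U f \<longleftrightarrow> f differentiable_on U \<and> (\<forall>i. su n U (pd i f))"
proof
  assume "su (Suc n) U f"
  then show "f differentiable_on U \<and> (\<forall>i. su n U (pd i f))"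
    unfolding su_def
  proof (intro conjI allI impI)
    assume a: "\<forall>is. length is \<le> Suc n \<longrightarrow> pdl is f differentiable_on U"
    show "f differentiable_on U" using a[rule_format, of "[]"] by simp
    fix i and "is" :: "'a list" assume "length is \<le> n"
    then show "pdl is (pd i f) differentiable_on U" using a[rule_format, of "is @ [i]"] by (simp add: pdl_snoc)
  qed
next
  assume a: "f differentiable_on U \<and> (\<forall>i. su n U (pd i f))"
  show "su (Suc n) U f" unfolding su_def
  proof (intro allI impI)
    fix "is" :: "'a list" assume l: "length is \<le> Suc n"
    show "pdl is f differentiable_on U"
    proof (cases "is" rule: rev_cases)
      case Nil then show ?thesis using a by simp
    next
      case (snoc js i)
      then have "length js \<le> n" using l by simp
      then have "pdl js (pd i f) differentiable_on U" using a unfolding su_def by blast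
      then show ?thesis using snoc by (simp add: pdl_snoc)
    qed
  qed
qed

lemma su_mono: "su n U f \<Longrightarrow> m \<le> n \<Longrightarrow> su m U f"
  unfolding su_def by auto

lemma smooth_su: "smooth_on U f \<longleftrightarrow> (\<forall>n. su n U f)"
  unfolding smooth_on_def su_def by auto

lemma su_diff: "su n U f \<Longrightarrow> f differentiable_on U"
  unfolding su_def by (drule spec[of _ "[]"]) simp

lemma su_cong:
  assumes "open U" "\<forall>y\<in>U. f y = g y" "su n U f"
  shows "su n U g"
  unfolding su_def
proof (intro allI impI)
  fix "is" :: "'a list" assume "length is \<le> n"
  then have "pdl is f differentiable_on U" using assms(3) unfolding su_def by blast
  then show "pdl is g differentiable_on U"
    using diff_on_cong[OF assms(1) pdl_local[OF assms(1,2)]] by blast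
qed

lemma su_pd: "su (Suc n) U f \<Longrightarrow> su n U (pd i f)"
  unfolding su_Suc by simp

lemma smooth_pd: "smooth_on U f \<Longrightarrow> smooth_on U (pd i f)"
  unfolding smooth_su using su_pd by blast

lemma su_diff_at: "open U \<Longrightarrow> su n U f \<Longrightarrow> x \<in> U \<Longrightarrow> f differentiable at x"
  using su_diff[of n U f] by (simp add: differentiable_on_eq_differentiable_at)

lemma smooth_diff_at: "open U \<Longrightarrow> smooth_on U f \<Longrightarrow> x \<in> U \<Longrightarrow> f differentiable at x"
  unfolding smooth_su by (rule su_diff_at) auto


lemma fd_lin: "f differentiable at x \<Longrightarrow> linear (frechet_derivative f (at x))"
  by (simp add: linear_frechet_derivative)

abbreviation "fd f x \<equiv> frechet_derivative f (at x)"

lemma pd_add: "f differentiable at x \<Longrightarrow> g differentiable at x \<Longrightarrow>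
   pd i (\<lambda>y. f y + g y) x = pd i f x + pd i g x"
proof -
  assume a: "f differentiable at x" "g differentiable at x"
  have "((\<lambda>y. f y + g y) has_derivative (\<lambda>h. fd f x h + fd g x h)) (at x)"
    by (intro has_derivative_add pd_has a)
  from pd_eq[OF this] show ?thesis by (simp add: pd_def)
qed

lemma pd_diff: "f differentiable at x \<Longrightarrow> g differentiable at x \<Longrightarrow>
   pd i (\<lambda>y. f y - g y) x = pd i f x - pd i g x"
proof -
  assume a: "f differentiable at x" "g differentiable at x"
  have "((\<lambda>y. f y - g y) has_derivative (\<lambda>h. fd f x h - fd g x h)) (at x)"
    by (intro has_derivative_diff pd_has a)
  from pd_eq[OF this] show ?thesis by (simp add: pd_def)
qed

lemma pd_minus: "f differentiable at x \<Longrightarrow> pd i (\<lambda>y. - f y) x = - pd i f x"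
proof -
  assume a: "f differentiable at x"
  have "((\<lambda>y. - f y) has_derivative (\<lambda>h. - fd f x h)) (at x)"
    by (intro has_derivative_minus pd_has a)
  from pd_eq[OF this] show ?thesis by (simp add: pd_def)
qed

lemma pd_const[simp]: "pd i (\<lambda>y. c) x = 0"
proof -
  have "((\<lambda>y. c) has_derivative (\<lambda>h. 0)) (at x)" by simp
  from pd_eq[OF this] show ?thesis by simp
qed

lemma pd_mult: fixes f g :: "real^'n::finite \<Rightarrow> real"
  shows "f differentiable at x \<Longrightarrow> g differentiable at x \<Longrightarrow>
   pd i (\<lambda>y. f y * g y) x = pd i f x * g x + f x * pd i g x"
proof -
  assume a: "f differentiable at x" "g differentiable at x"
  have "((\<lambda>y. f y * g y) has_derivative (\<lambda>h. f x * fd g x h + fd f x h * g x)) (at x)"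
    by (intro has_derivative_mult pd_has a)
  from pd_eq[OF this] show ?thesis by (simp add: pd_def)
qed

lemma pd_scaleR: fixes f :: "real^'n::finite \<Rightarrow> real" and g :: "real^'n \<Rightarrow> 'a::real_normed_vector"
  shows "f differentiable at x \<Longrightarrow> g differentiable at x \<Longrightarrow>
   pd i (\<lambda>y. f y *\<^sub>R g y) x = pd i f x *\<^sub>R g x + f x *\<^sub>R pd i g x"
proof -
  assume a: "f differentiable at x" "g differentiable at x"
  have "((\<lambda>y. f y *\<^sub>R g y) has_derivative (\<lambda>h. f x *\<^sub>R fd g x h + fd f x h *\<^sub>R g x)) (at x)"
    by (intro has_derivative_scaleR pd_has a)
  from pd_eq[OF this] show ?thesis by (simp add: pd_def)
qed

lemma pd_inner: fixes f g :: "real^'n::finite \<Rightarrow> 'a::real_inner"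
  shows "f differentiable at x \<Longrightarrow> g differentiable at x \<Longrightarrow>
   pd i (\<lambda>y. f y \<bullet> g y) x = pd i f x \<bullet> g x + f x \<bullet> pd i g x"
proof -
  assume a: "f differentiable at x" "g differentiable at x"
  have "((\<lambda>y. f y \<bullet> g y) has_derivative (\<lambda>h. f x \<bullet> fd g x h + fd f x h \<bullet> g x)) (at x)"
    by (intro has_derivative_inner pd_has a)
  from pd_eq[OF this] show ?thesis by (simp add: pd_def)
qed

lemma pd_cmult: fixes f :: "real^'n::finite \<Rightarrow> real"
  shows "f differentiable at x \<Longrightarrow> pd i (\<lambda>y. c * f y) x = c * pd i f x"
  using pd_mult[of "\<lambda>_. c" x f i] by simp

lemma pd_sum: "finite I \<Longrightarrow> (\<And>k. k \<in> I \<Longrightarrow> f k differentiable at x) \<Longrightarrow>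
   pd i (\<lambda>y. \<Sum>k\<in>I. f k y) x = (\<Sum>k\<in>I. pd i (f k) x)"
proof -
  assume a: "\<And>k. k \<in> I \<Longrightarrow> f k differentiable at x"
  have "((\<lambda>y. \<Sum>k\<in>I. f k y) has_derivative (\<lambda>h. \<Sum>k\<in>I. fd (f k) x h)) (at x)"
    by (intro has_derivative_sum pd_has a)
  from pd_eq[OF this] show ?thesis by (simp add: pd_def)
qed

lemma pd_component: fixes f :: "real^'n::finite \<Rightarrow> real^'m::finite"
  shows "f differentiable at x \<Longrightarrow> pd i (\<lambda>y. f y $ a) x = pd i f x $ a"
proof -
  assume d: "f differentiable at x"
  have "((\<lambda>y. f y \<bullet> axis a 1) has_derivative (\<lambda>h. frechet_derivative f (at x) h \<bullet> axis a 1)) (at x)"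
    by (intro has_derivative_inner_left pd_has d)
  from pd_eq[OF this] show ?thesis by (simp add: pd_def inner_axis)
qed

lemma pd_inverse: fixes f :: "real^'n::finite \<Rightarrow> real"
  shows "f differentiable at x \<Longrightarrow> f x \<noteq> 0 \<Longrightarrow>
   pd i (\<lambda>y. inverse (f y)) x = - (pd i f x * inverse (f x) * inverse (f x))"
proof -
  assume a: "f differentiable at x" "f x \<noteq> 0"
  have "((\<lambda>y. inverse (f y)) has_derivative (\<lambda>h. - (inverse (f x) * fd f x h * inverse (f x)))) (at x)"
    by (rule Deriv.has_derivative_inverse[OF a(2) pd_has[OF a(1)]])
  from pd_eq[OF this] show ?thesis by (simp add: pd_def)
qed

lemma diff_at_inverse: fixes f :: "real^'n::finite \<Rightarrow> real"
  shows "f differentiable at x \<Longrightarrow> f x \<noteq> 0 \<Longrightarrow> (\<lambda>y. inverse (f y)) differentiable at x"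
  unfolding differentiable_def using Deriv.has_derivative_inverse by blast

lemma su_const: fixes U :: "(real^'n::finite) set" and c :: "'a::real_normed_vector"
  shows "su n U (\<lambda>x. c)"
proof (induction n arbitrary: c)
  case 0 then show ?case by (simp add: su_0)
next
  case (Suc n)
  show ?case unfolding su_Suc
  proof (intro conjI allI)
    show "(\<lambda>x. c) differentiable_on U" by simp
    fix i :: 'n
    have "pd i (\<lambda>x. c) = (\<lambda>x. 0)" by (rule ext) simp
    then show "su n U (pd i (\<lambda>x. c))" using Suc.IH[of 0] by simp
  qed
qed



lemma differentiable_on_inner: "f differentiable_on S \<Longrightarrow> g differentiable_on S \<Longrightarrow> (\<lambda>x. f x \<bullet> g x) differentiable_on S"
  unfolding differentiable_on_def by simp
context fixes U :: "(real^'n::finite) set" assumes U: "open U"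
begin

lemma su_add: "su n U f \<Longrightarrow> su n U g \<Longrightarrow> su n U (\<lambda>x. f x + g x)"
proof (induction n arbitrary: f g)
  case 0 then show ?case by (simp add: su_0 differentiable_on_add)
next
  case (Suc n)
  show ?case unfolding su_Suc
  proof (intro conjI allI)
    show "(\<lambda>x. f x + g x) differentiable_on U" using Suc by (simp add: su_diff differentiable_on_add)
    fix i
    have A: "su n U (\<lambda>x. pd i f x + pd i g x)" by (rule Suc.IH[OF su_pd[OF Suc.prems(1)] su_pd[OF Suc.prems(2)]])
    have B: "\<forall>y\<in>U. pd i f y + pd i g y = pd i (\<lambda>x. f x + g x) y"
      using su_diff_at[OF U Suc.prems(1)] su_diff_at[OF U Suc.prems(2)] by (simp add: pd_add)
    show "su n U (pd i (\<lambda>x. f x + g x))" by (rule su_cong[OF U B A])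
  qed
qed

lemma su_minus: "su n U f \<Longrightarrow> su n U (\<lambda>x. - f x)"
proof (induction n arbitrary: f)
  case 0 then show ?case by (simp add: su_0 differentiable_on_minus)
next
  case (Suc n)
  show ?case unfolding su_Suc
  proof (intro conjI allI)
    show "(\<lambda>x. - f x) differentiable_on U" using Suc by (simp add: su_diff differentiable_on_minus)
    fix i
    have A: "su n U (\<lambda>x. - pd i f x)" by (rule Suc.IH[OF su_pd[OF Suc.prems(1)]])
    have B: "\<forall>y\<in>U. - pd i f y = pd i (\<lambda>x. - f x) y"
      using su_diff_at[OF U Suc.prems(1)] by (simp add: pd_minus)
    show "su n U (pd i (\<lambda>x. - f x))" by (rule su_cong[OF U B A])
  qed
qed

lemma su_sub: "su n U f \<Longrightarrow> su n U g \<Longrightarrow> su n U (\<lambda>x. f x - g x)"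
  using su_add[of n f "\<lambda>x. - g x"] su_minus[of n g] by simp

lemma su_sum: assumes "finite I" "\<And>k. k \<in> I \<Longrightarrow> su n U (f k)" shows "su n U (\<lambda>x. \<Sum>k\<in>I. f k x)"
  using assms
proof (induction I rule: finite_induct)
  case empty then show ?case by (simp add: su_const)
next
  case (insert a F) then show ?case by (simp add: su_add)
qed

lemma su_mult: fixes f g :: "real^'n \<Rightarrow> real"
  shows "su n U f \<Longrightarrow> su n U g \<Longrightarrow> su n U (\<lambda>x. f x * g x)"
proof (induction n arbitrary: f g)
  case 0 then show ?case by (simp add: su_0 differentiable_on_mult)
next
  case (Suc n)
  show ?case unfolding su_Suc
  proof (intro conjI allI)
    show "(\<lambda>x. f x * g x) differentiable_on U" using Suc by (simp add: su_diff differentiable_on_mult)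
    fix i
    have f: "su n U f" "su n U g" using Suc.prems su_mono[of "Suc n" U _ n] by auto
    have A: "su n U (\<lambda>x. pd i f x * g x + f x * pd i g x)"
      by (rule su_add[OF Suc.IH[OF su_pd[OF Suc.prems(1)] f(2)] Suc.IH[OF f(1) su_pd[OF Suc.prems(2)]]])
    have B: "\<forall>y\<in>U. pd i f y * g y + f y * pd i g y = pd i (\<lambda>x. f x * g x) y"
      using su_diff_at[OF U Suc.prems(1)] su_diff_at[OF U Suc.prems(2)] by (simp add: pd_mult)
    show "su n U (pd i (\<lambda>x. f x * g x))" by (rule su_cong[OF U B A])
  qed
qed

lemma su_scaleR: fixes f :: "real^'n \<Rightarrow> real" and g :: "real^'n \<Rightarrow> 'a::real_normed_vector"
  shows "su n U f \<Longrightarrow> su n U g \<Longrightarrow> su n U (\<lambda>x. f x *\<^sub>R g x)"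
proof (induction n arbitrary: f g)
  case 0 then show ?case by (simp add: su_0 differentiable_on_scaleR)
next
  case (Suc n)
  show ?case unfolding su_Suc
  proof (intro conjI allI)
    show "(\<lambda>x. f x *\<^sub>R g x) differentiable_on U" using Suc by (simp add: su_diff differentiable_on_scaleR)
    fix i
    have f: "su n U f" "su n U g" using Suc.prems su_mono[of "Suc n" U _ n] by auto
    have A: "su n U (\<lambda>x. pd i f x *\<^sub>R g x + f x *\<^sub>R pd i g x)"
      by (rule su_add[OF Suc.IH[OF su_pd[OF Suc.prems(1)] f(2)] Suc.IH[OF f(1) su_pd[OF Suc.prems(2)]]])
    have B: "\<forall>y\<in>U. pd i f y *\<^sub>R g y + f y *\<^sub>R pd i g y = pd i (\<lambda>x. f x *\<^sub>R g x) y"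
      using su_diff_at[OF U Suc.prems(1)] su_diff_at[OF U Suc.prems(2)] by (simp add: pd_scaleR)
    show "su n U (pd i (\<lambda>x. f x *\<^sub>R g x))" by (rule su_cong[OF U B A])
  qed
qed

lemma su_inner: fixes f g :: "real^'n \<Rightarrow> 'a::real_inner"
  shows "su n U f \<Longrightarrow> su n U g \<Longrightarrow> su n U (\<lambda>x. f x \<bullet> g x)"
proof (induction n arbitrary: f g)
  case 0 then show ?case by (simp add: su_0 differentiable_on_inner)
next
  case (Suc n)
  show ?case unfolding su_Suc
  proof (intro conjI allI)
    show "(\<lambda>x. f x \<bullet> g x) differentiable_on U" using Suc by (simp add: su_diff differentiable_on_inner)
    fix i
    have f: "su n U f" "su n U g" using Suc.prems su_mono[of "Suc n" U _ n] by auto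
    have A: "su n U (\<lambda>x. pd i f x \<bullet> g x + f x \<bullet> pd i g x)"
      by (rule su_add[OF Suc.IH[OF su_pd[OF Suc.prems(1)] f(2)] Suc.IH[OF f(1) su_pd[OF Suc.prems(2)]]])
    have B: "\<forall>y\<in>U. pd i f y \<bullet> g y + f y \<bullet> pd i g y = pd i (\<lambda>x. f x \<bullet> g x) y"
      using su_diff_at[OF U Suc.prems(1)] su_diff_at[OF U Suc.prems(2)] by (simp add: pd_inner)
    show "su n U (pd i (\<lambda>x. f x \<bullet> g x))" by (rule su_cong[OF U B A])
  qed
qed

lemma su_prod: fixes f :: "'k \<Rightarrow> real^'n \<Rightarrow> real"
  assumes "finite I" "\<And>k. k \<in> I \<Longrightarrow> su n U (f k)" shows "su n U (\<lambda>x. \<Prod>k\<in>I. f k x)"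
  using assms
proof (induction I rule: finite_induct)
  case empty then show ?case by (simp add: su_const)
next
  case (insert a F) then show ?case by (simp add: su_mult)
qed

lemma su_component: fixes f :: "real^'n \<Rightarrow> real^'m::finite"
  shows "su n U f \<Longrightarrow> su n U (\<lambda>x. f x $ a)"
  using su_inner[of n f "\<lambda>_. axis a 1"] su_const[of n U "axis a 1"] by (simp add: inner_axis)

lemma su_inverse: fixes f :: "real^'n \<Rightarrow> real"
  shows "su n U f \<Longrightarrow> \<forall>x\<in>U. f x \<noteq> 0 \<Longrightarrow> su n U (\<lambda>x. inverse (f x))"
proof (induction n arbitrary: f)
  case 0 then show ?case
    using su_diff_at[OF U] diff_at_inverse by (simp add: su_0 differentiable_on_eq_differentiable_at[OF U])
next
  case (Suc n)
  have iv: "su n U (\<lambda>x. inverse (f x))" using Suc.IH[OF su_mono[OF Suc.prems(1)] Suc.prems(2)] by simp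
  show ?case unfolding su_Suc
  proof (intro conjI allI)
    show "(\<lambda>x. inverse (f x)) differentiable_on U" by (rule su_diff[OF iv])
    fix i
    have A: "su n U (\<lambda>x. - (pd i f x * inverse (f x) * inverse (f x)))"
      by (rule su_minus[OF su_mult[OF su_mult[OF su_pd[OF Suc.prems(1)] iv] iv]])
    have B: "\<forall>y\<in>U. - (pd i f y * inverse (f y) * inverse (f y)) = pd i (\<lambda>x. inverse (f x)) y"
      using su_diff_at[OF U Suc.prems(1)] Suc.prems(2) by (simp add: pd_inverse)
    show "su n U (pd i (\<lambda>x. inverse (f x)))" by (rule su_cong[OF U B A])
  qed
qed

end


lemma line_deriv:
  fixes g :: "real^'n::finite \<Rightarrow> real"
  assumes "g differentiable at (q + \<sigma> *\<^sub>R axis k 1)"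
  shows "((\<lambda>s. g (q + s *\<^sub>R axis k 1)) has_real_derivative pd k g (q + \<sigma> *\<^sub>R axis k 1)) (at \<sigma>)"
proof -
  let ?x = "q + \<sigma> *\<^sub>R axis k 1"
  have l: "((\<lambda>s. q + s *\<^sub>R axis k (1::real)) has_derivative (\<lambda>s. s *\<^sub>R axis k 1)) (at \<sigma>)"
    by (auto intro!: derivative_eq_intros)
  have "((\<lambda>s. g (q + s *\<^sub>R axis k 1)) has_derivative (\<lambda>s. fd g ?x (s *\<^sub>R axis k 1))) (at \<sigma>)"
    by (rule has_derivative_compose[OF l pd_has[OF assms]])
  moreover have "(\<lambda>s. fd g ?x (s *\<^sub>R axis k 1)) = (*) (pd k g ?x)"
    using linear_frechet_derivative[OF assms] by (auto simp: pd_def linear_scale mult.commute)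
  ultimately show ?thesis by (simp add: has_field_derivative_def mult.commute)
qed

lemma schwarz_key:
  fixes f :: "real^'n::finite \<Rightarrow> real"
  assumes h: "0 < h"
    and inU: "\<And>s t. 0 \<le> s \<Longrightarrow> s \<le> h \<Longrightarrow> 0 \<le> t \<Longrightarrow> t \<le> h \<Longrightarrow> p + s *\<^sub>R axis i 1 + t *\<^sub>R axis j 1 \<in> U"
    and fd: "\<And>x. x \<in> U \<Longrightarrow> f differentiable at x"
    and fi: "\<And>x. x \<in> U \<Longrightarrow> pd i f differentiable at x"
  shows "\<exists>s t. 0 < s \<and> s < h \<and> 0 < t \<and> t < h \<and>
     f (p + h *\<^sub>R axis i 1 + h *\<^sub>R axis j 1) - f (p + h *\<^sub>R axis i 1) - f (p + h *\<^sub>R axis j 1) + f p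
       = h * h * pd j (pd i f) (p + s *\<^sub>R axis i 1 + t *\<^sub>R axis j 1)"
proof -
  define e :: "real^'n" where "e = axis i 1"
  define d :: "real^'n" where "d = axis j 1"
  define A where "A \<sigma> = f ((p + h *\<^sub>R d) + \<sigma> *\<^sub>R e) - f (p + \<sigma> *\<^sub>R e)" for \<sigma>
  have dA: "DERIV A \<sigma> :> pd i f ((p + h *\<^sub>R d) + \<sigma> *\<^sub>R e) - pd i f (p + \<sigma> *\<^sub>R e)"
    if "0 \<le> \<sigma>" "\<sigma> \<le> h" for \<sigma>
  proof -
    have m1: "(p + h *\<^sub>R d) + \<sigma> *\<^sub>R e \<in> U" using inU[of \<sigma> h] that h
      by (simp add: e_def d_def algebra_simps)
    have m2: "p + \<sigma> *\<^sub>R e \<in> U" using inU[of \<sigma> 0] that h by (simp add: e_def d_def)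
    show ?thesis unfolding A_def[abs_def] e_def
      by (intro DERIV_diff line_deriv fd) (use m1 m2 in \<open>auto simp: e_def\<close>)
  qed
  obtain s where s: "0 < s" "s < h"
    and sA: "A h - A 0 = (h - 0) * (pd i f ((p + h *\<^sub>R d) + s *\<^sub>R e) - pd i f (p + s *\<^sub>R e))"
    using MVT2[OF h dA] by auto
  define B where "B \<tau> = pd i f ((p + s *\<^sub>R e) + \<tau> *\<^sub>R d)" for \<tau>
  have dB: "DERIV B \<tau> :> pd j (pd i f) ((p + s *\<^sub>R e) + \<tau> *\<^sub>R d)"
    if "0 \<le> \<tau>" "\<tau> \<le> h" for \<tau>
  proof -
    have m1: "(p + s *\<^sub>R e) + \<tau> *\<^sub>R d \<in> U" using inU[of s \<tau>] that s
      by (simp add: e_def d_def algebra_simps)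
    show ?thesis unfolding B_def[abs_def] d_def
      by (intro line_deriv fi) (use m1 in \<open>auto simp: d_def\<close>)
  qed
  obtain t where t: "0 < t" "t < h"
    and tB: "B h - B 0 = (h - 0) * pd j (pd i f) ((p + s *\<^sub>R e) + t *\<^sub>R d)"
    using MVT2[OF h dB] by auto
  have "f (p + h *\<^sub>R e + h *\<^sub>R d) - f (p + h *\<^sub>R e) - f (p + h *\<^sub>R d) + f p = A h - A 0"
    unfolding A_def by (simp add: algebra_simps)
  also have "\<dots> = h * (B h - B 0)" using sA unfolding B_def by (simp add: algebra_simps)
  also have "\<dots> = h * h * pd j (pd i f) (p + s *\<^sub>R e + t *\<^sub>R d)" using tB by simp
  finally show ?thesis using s t unfolding e_def d_def by blast
qed

lemma dist_two_axis: "dist (p + s *\<^sub>R axis i (1::real) + t *\<^sub>R axis j 1) p \<le> \<bar>s\<bar> + \<bar>t\<bar>"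
proof -
  have "dist (p + s *\<^sub>R axis i (1::real) + t *\<^sub>R axis j 1) p = norm (s *\<^sub>R axis i (1::real) + t *\<^sub>R axis j 1)"
    by (simp add: dist_norm)
  also have "\<dots> \<le> norm (s *\<^sub>R axis i (1::real)) + norm (t *\<^sub>R axis j (1::real))" by (rule norm_triangle_ineq)
  also have "\<dots> = \<bar>s\<bar> + \<bar>t\<bar>" by simp
  finally show ?thesis .
qed

lemma schwarz:
  fixes f :: "real^'n::finite \<Rightarrow> real"
  assumes U: "open U" and f: "su 2 U f" and p: "p \<in> U"
  shows "pd i (pd j f) p = pd j (pd i f) p"
proof -
  obtain r where r: "r > 0" "ball p r \<subseteq> U" using U p open_contains_ball by blast
  have s1: "su 1 U (pd i f)" "su 1 U (pd j f)" using f su_pd[of 1 U f] by (simp_all add: numeral_2_eq_2)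
  have s0: "su 0 U (pd j (pd i f))" "su 0 U (pd i (pd j f))" using s1 su_pd[of 0 U] by simp_all
  have fd: "\<And>x. x \<in> U \<Longrightarrow> f differentiable at x" using su_diff_at[OF U f] by blast
  have fi: "\<And>x. x \<in> U \<Longrightarrow> pd i f differentiable at x" using su_diff_at[OF U s1(1)] by blast
  have fj: "\<And>x. x \<in> U \<Longrightarrow> pd j f differentiable at x" using su_diff_at[OF U s1(2)] by blast
  define F1 where "F1 = pd j (pd i f)"
  define F2 where "F2 = pd i (pd j f)"
  have c1: "continuous (at p) F1" unfolding F1_def
    by (rule differentiable_imp_continuous_within[OF su_diff_at[OF U s0(1) p]])
  have c2: "continuous (at p) F2" unfolding F2_def
    by (rule differentiable_imp_continuous_within[OF su_diff_at[OF U s0(2) p]])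
  show ?thesis
  proof (rule ccontr)
    assume ne: "pd i (pd j f) p \<noteq> pd j (pd i f) p"
    define \<epsilon> where "\<epsilon> = \<bar>F1 p - F2 p\<bar> / 2"
    have \<epsilon>: "\<epsilon> > 0" using ne unfolding \<epsilon>_def F1_def F2_def by simp
    obtain d1 where d1: "d1 > 0" "\<And>y. dist y p < d1 \<Longrightarrow> dist (F1 y) (F1 p) < \<epsilon>"
      using c1 \<epsilon> unfolding continuous_at_eps_delta by blast
    obtain d2 where d2: "d2 > 0" "\<And>y. dist y p < d2 \<Longrightarrow> dist (F2 y) (F2 p) < \<epsilon>"
      using c2 \<epsilon> unfolding continuous_at_eps_delta by blast
    define h where "h = min r (min d1 d2) / 4"
    have h: "0 < h" "2 * h < r" "2 * h < d1" "2 * h < d2" using r d1 d2 unfolding h_def by auto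
    have inU: "\<And>a b s t. 0 \<le> s \<Longrightarrow> s \<le> h \<Longrightarrow> 0 \<le> t \<Longrightarrow> t \<le> h \<Longrightarrow> p + s *\<^sub>R axis a 1 + t *\<^sub>R axis b 1 \<in> U"
    proof -
      fix a b s t assume st: "0 \<le> s" "s \<le> h" "0 \<le> t" "t \<le> h"
      have "dist (p + s *\<^sub>R axis a 1 + t *\<^sub>R axis b 1) p \<le> \<bar>s\<bar> + \<bar>t\<bar>" by (rule dist_two_axis)
      then have "dist p (p + s *\<^sub>R axis a 1 + t *\<^sub>R axis b 1) < r" using st h by (simp add: dist_commute)
      then show "p + s *\<^sub>R axis a 1 + t *\<^sub>R axis b 1 \<in> U" using r by auto
    qed
    obtain s t where st: "0 < s" "s < h" "0 < t" "t < h"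
      and k1: "f (p + h *\<^sub>R axis i 1 + h *\<^sub>R axis j 1) - f (p + h *\<^sub>R axis i 1) - f (p + h *\<^sub>R axis j 1) + f p
       = h * h * F1 (p + s *\<^sub>R axis i 1 + t *\<^sub>R axis j 1)"
      using schwarz_key[OF h(1) inU fd fi] unfolding F1_def by blast
    obtain s' t' where st': "0 < s'" "s' < h" "0 < t'" "t' < h"
      and k2: "f (p + h *\<^sub>R axis j 1 + h *\<^sub>R axis i 1) - f (p + h *\<^sub>R axis j 1) - f (p + h *\<^sub>R axis i 1) + f p
       = h * h * F2 (p + s' *\<^sub>R axis j 1 + t' *\<^sub>R axis i 1)"
      using schwarz_key[OF h(1) inU fd fj] unfolding F2_def by blast
    have pt: "p + h *\<^sub>R axis j 1 + h *\<^sub>R axis i 1 = p + h *\<^sub>R axis i 1 + h *\<^sub>R axis j (1::real)"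
      by (simp add: algebra_simps)
    have k2': "f (p + h *\<^sub>R axis i 1 + h *\<^sub>R axis j 1) - f (p + h *\<^sub>R axis j 1) - f (p + h *\<^sub>R axis i 1) + f p
       = h * h * F2 (p + s' *\<^sub>R axis j 1 + t' *\<^sub>R axis i 1)" using k2 unfolding pt .
    have "h * h * F1 (p + s *\<^sub>R axis i 1 + t *\<^sub>R axis j 1) = h * h * F2 (p + s' *\<^sub>R axis j 1 + t' *\<^sub>R axis i 1)"
      using k1 k2' by linarith
    then have eq: "F1 (p + s *\<^sub>R axis i 1 + t *\<^sub>R axis j 1) = F2 (p + s' *\<^sub>R axis j 1 + t' *\<^sub>R axis i 1)"
      using h(1) by simp
    have "dist (p + s *\<^sub>R axis i 1 + t *\<^sub>R axis j 1) p < d1"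
      using dist_two_axis[of p s i t j] st h by simp
    then have a1: "dist (F1 (p + s *\<^sub>R axis i 1 + t *\<^sub>R axis j 1)) (F1 p) < \<epsilon>" by (rule d1(2))
    have "dist (p + s' *\<^sub>R axis j 1 + t' *\<^sub>R axis i 1) p < d2"
      using dist_two_axis[of p s' j t' i] st' h by simp
    then have a2: "dist (F2 (p + s' *\<^sub>R axis j 1 + t' *\<^sub>R axis i 1)) (F2 p) < \<epsilon>" by (rule d2(2))
    have aux: "\<And>a b c d::real. \<bar>a - c\<bar> < \<bar>c - d\<bar> / 2 \<Longrightarrow> \<bar>b - d\<bar> < \<bar>c - d\<bar> / 2 \<Longrightarrow> a = b \<Longrightarrow> False"
      by (simp add: abs_if split: if_split_asm)
    show False using aux[OF a1[unfolded \<epsilon>_def dist_real_def] a2[unfolded \<epsilon>_def dist_real_def] eq] .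
  qed
qed


lemma pd_pd_component:
  fixes F :: "real^'n::finite \<Rightarrow> real^'m::finite"
  assumes U: "open U" and F: "su 2 U F" and p: "p \<in> U"
  shows "pd i (pd j F) p $ a = pd i (pd j (\<lambda>q. F q $ a)) p"
proof -
  have s1: "su 1 U (pd j F)" using F su_pd[of 1 U F] by (simp add: numeral_2_eq_2)
  have "pd i (pd j F) p $ a = pd i (\<lambda>q. pd j F q $ a) p"
    by (rule pd_component[symmetric, OF su_diff_at[OF U s1 p]])
  also have "\<dots> = pd i (pd j (\<lambda>q. F q $ a)) p"
    by (rule pd_local[OF U p]) (use su_diff_at[OF U F] pd_component in metis)
  finally show ?thesis .
qed

lemma schwarz_vec:
  fixes F :: "real^'n::finite \<Rightarrow> real^'m::finite"
  assumes U: "open U" and F: "su 2 U F" and p: "p \<in> U"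
  shows "pd i (pd j F) p = pd j (pd i F) p"
proof (rule vec_eq_iff[THEN iffD2], rule allI)
  fix a
  show "pd i (pd j F) p $ a = pd j (pd i F) p $ a"
    unfolding pd_pd_component[OF assms] by (rule schwarz[OF U su_component[OF U F] p])
qed

context fixes U :: "(real^'n::finite) set" assumes U: "open U"
begin

lemma smooth_cong: "smooth_on U f \<Longrightarrow> \<forall>y\<in>U. f y = g y \<Longrightarrow> smooth_on U g"
  unfolding smooth_su using su_cong[OF U] by blast

lemma smooth_const: "smooth_on U (\<lambda>x. c)"
  unfolding smooth_su using su_const by blast

lemma smooth_add: "smooth_on U f \<Longrightarrow> smooth_on U g \<Longrightarrow> smooth_on U (\<lambda>x. f x + g x)"
  unfolding smooth_su using su_add[OF U] by blast

lemma smooth_sub: "smooth_on U f \<Longrightarrow> smooth_on U g \<Longrightarrow> smooth_on U (\<lambda>x. f x - g x)"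
  unfolding smooth_su using su_sub[OF U] by blast

lemma smooth_minus: "smooth_on U f \<Longrightarrow> smooth_on U (\<lambda>x. - f x)"
  unfolding smooth_su using su_minus[OF U] by blast

lemma smooth_mult: fixes f g :: "real^'n \<Rightarrow> real"
  shows "smooth_on U f \<Longrightarrow> smooth_on U g \<Longrightarrow> smooth_on U (\<lambda>x. f x * g x)"
  unfolding smooth_su using su_mult[OF U] by blast

lemma smooth_scaleR: fixes f :: "real^'n \<Rightarrow> real" and g :: "real^'n \<Rightarrow> 'a::real_normed_vector"
  shows "smooth_on U f \<Longrightarrow> smooth_on U g \<Longrightarrow> smooth_on U (\<lambda>x. f x *\<^sub>R g x)"
  unfolding smooth_su using su_scaleR[OF U] by blast

lemma smooth_inner: fixes f g :: "real^'n \<Rightarrow> 'a::real_inner"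
  shows "smooth_on U f \<Longrightarrow> smooth_on U g \<Longrightarrow> smooth_on U (\<lambda>x. f x \<bullet> g x)"
  unfolding smooth_su using su_inner[OF U] by blast

lemma smooth_sum: "finite I \<Longrightarrow> (\<And>k. k \<in> I \<Longrightarrow> smooth_on U (f k)) \<Longrightarrow> smooth_on U (\<lambda>x. \<Sum>k\<in>I. f k x)"
  unfolding smooth_su using su_sum[OF U] by blast

lemma smooth_prod: fixes f :: "'k \<Rightarrow> real^'n \<Rightarrow> real"
  shows "finite I \<Longrightarrow> (\<And>k. k \<in> I \<Longrightarrow> smooth_on U (f k)) \<Longrightarrow> smooth_on U (\<lambda>x. \<Prod>k\<in>I. f k x)"
  unfolding smooth_su using su_prod[OF U] by blast

lemma smooth_component: fixes f :: "real^'n \<Rightarrow> real^'m::finite"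
  shows "smooth_on U f \<Longrightarrow> smooth_on U (\<lambda>x. f x $ a)"
  unfolding smooth_su using su_component[OF U] by blast

lemma smooth_inverse: fixes f :: "real^'n \<Rightarrow> real"
  shows "smooth_on U f \<Longrightarrow> \<forall>x\<in>U. f x \<noteq> 0 \<Longrightarrow> smooth_on U (\<lambda>x. inverse (f x))"
  unfolding smooth_su using su_inverse[OF U] by blast

lemma smooth_divide: fixes f g :: "real^'n \<Rightarrow> real"
  shows "smooth_on U f \<Longrightarrow> smooth_on U g \<Longrightarrow> \<forall>x\<in>U. g x \<noteq> 0 \<Longrightarrow> smooth_on U (\<lambda>x. f x / g x)"
  using smooth_mult[OF _ smooth_inverse] by (simp add: divide_inverse)

lemma smooth_su2: "smooth_on U f \<Longrightarrow> su 2 U f"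
  unfolding smooth_su by blast

lemma smooth_da: "smooth_on U f \<Longrightarrow> x \<in> U \<Longrightarrow> f differentiable at x"
  by (rule smooth_diff_at[OF U])

lemma smooth_schwarz: fixes f :: "real^'n \<Rightarrow> real"
  shows "smooth_on U f \<Longrightarrow> x \<in> U \<Longrightarrow> pd i (pd j f) x = pd j (pd i f) x"
  using schwarz[OF U smooth_su2] by blast

lemma smooth_schwarz_vec: fixes f :: "real^'n \<Rightarrow> real^'m::finite"
  shows "smooth_on U f \<Longrightarrow> x \<in> U \<Longrightarrow> pd i (pd j f) x = pd j (pd i f) x"
  using schwarz_vec[OF U smooth_su2] by blast

lemma smooth_pd_local: "\<forall>y\<in>U. f y = g y \<Longrightarrow> x \<in> U \<Longrightarrow> pd i f x = pd i g x"
  using pd_local[OF U] by blast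

end


lemma smooth_det:
  fixes A :: "real^'n::finite \<Rightarrow> real^'k::finite^'k"
  assumes U: "open U" and A: "\<And>a b. smooth_on U (\<lambda>q. A q $ a $ b)"
  shows "smooth_on U (\<lambda>q. det (A q))"
  unfolding det_def
  by (intro smooth_sum[OF U] smooth_mult[OF U] smooth_const[OF U] smooth_prod[OF U] A finite_permutations) auto

lemma sum_delta_r[simp]: fixes f :: "'b::finite \<Rightarrow> 'a::comm_ring_1" shows "(\<Sum>j\<in>UNIV. f j * (if j = k then 1 else 0)) = (f k :: 'a::comm_ring_1)"
proof -
  have "(\<Sum>j\<in>UNIV. f j * (if j = k then 1 else 0)) = (\<Sum>j\<in>UNIV. if j = k then f j else 0)"
    by (rule sum.cong) auto
  then show ?thesis by simp
qed

lemma sum_delta_r'[simp]: fixes f :: "'b::finite \<Rightarrow> 'a::comm_ring_1" shows "(\<Sum>j\<in>UNIV. f j * (if k = j then 1 else 0)) = (f k :: 'a::comm_ring_1)"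
proof -
  have "(\<Sum>j\<in>UNIV. f j * (if k = j then 1 else 0)) = (\<Sum>j\<in>UNIV. if j = k then f j else 0)"
    by (rule sum.cong) auto
  then show ?thesis by simp
qed

lemma sum_delta_l[simp]: fixes f :: "'b::finite \<Rightarrow> 'a::comm_ring_1" shows "(\<Sum>j\<in>UNIV. (if j = k then 1 else 0) * f j) = (f k :: 'a::comm_ring_1)"
  using sum_delta_r[of f k] by (simp add: mult.commute)

lemma sum_delta_l'[simp]: fixes f :: "'b::finite \<Rightarrow> 'a::comm_ring_1" shows "(\<Sum>j\<in>UNIV. (if k = j then 1 else 0) * f j) = (f k :: 'a::comm_ring_1)"
  using sum_delta_r'[of f k] by (simp add: mult.commute)

lemma mat_axis: "(A *v axis j (1::real)) $ i = (A::real^'n::finite^'m::finite) $ i $ j"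
  by (simp add: matrix_vector_mult_def axis_def)

locale hs =
  fixes X :: "real^'n::finite \<Rightarrow> real^'m::finite" and nu :: "real^'n \<Rightarrow> real^'m" and U :: "(real^'n) set"
  assumes U: "open U" and dimm: "CARD('m) = CARD('n) + 1"
    and Xs: "smooth_on U X" and imm: "\<forall>p\<in>U. inj (frechet_derivative X (at p))"
    and nus: "smooth_on U nu" and unit: "\<forall>p\<in>U. norm (nu p) = 1"
    and normal: "\<forall>p\<in>U. \<forall>i. nu p \<bullet> pd i X p = 0"
begin

abbreviation gm where "gm q i j \<equiv> metric X q i j"
abbreviation gi where "gi q i j \<equiv> ginv X q i j"
definition Gm where "Gm q = (\<chi> a b. metric X q a b)"

lemma nunu: "q \<in> U \<Longrightarrow> nu q \<bullet> nu q = 1"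
  using unit by (simp add: dot_square_norm)

lemma nuX: "q \<in> U \<Longrightarrow> nu q \<bullet> pd i X q = 0"
  using normal by blast

lemma Xnu: "q \<in> U \<Longrightarrow> pd i X q \<bullet> nu q = 0"
  using normal by (simp add: inner_commute)

lemma X_diff: "q \<in> U \<Longrightarrow> X differentiable at q"
  by (rule smooth_diff_at[OF U Xs])

lemma fd_expand:
  assumes q: "q \<in> U"
  shows "fd X q c = (\<Sum>k\<in>UNIV. c $ k *\<^sub>R pd k X q)"
proof -
  have lin: "linear (fd X q)" by (rule linear_frechet_derivative[OF X_diff[OF q]])
  have "c = (\<Sum>k\<in>UNIV. c $ k *\<^sub>R axis k 1)"
    using basis_expansion[of c] by (simp add: scalar_mult_eq_scaleR)
  then have "fd X q c = fd X q (\<Sum>k\<in>UNIV. c $ k *\<^sub>R axis k 1)" by simp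
  also have "\<dots> = (\<Sum>k\<in>UNIV. c $ k *\<^sub>R fd X q (axis k 1))"
    by (simp add: linear_sum[OF lin] linear_scale[OF lin])
  finally show ?thesis by (simp add: pd_def)
qed

lemma gram_zero:
  assumes q: "q \<in> U" and c: "\<And>a. (\<Sum>b\<in>UNIV. gm q a b * c $ b) = 0"
  shows "c = 0"
proof -
  define w where "w = (\<Sum>k\<in>UNIV. c $ k *\<^sub>R pd k X q)"
  have "w \<bullet> w = (\<Sum>a\<in>UNIV. c $ a * (\<Sum>b\<in>UNIV. gm q a b * c $ b))"
    unfolding w_def metric_def
    by (simp add: inner_sum_left inner_sum_right sum_distrib_left mult_ac inner_commute)
  also have "\<dots> = 0" using c by simp
  finally have "w = 0" by simp
  then have "fd X q c = fd X q 0"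
    using fd_expand[OF q, of c] linear_0[OF linear_frechet_derivative[OF X_diff[OF q]]] w_def by simp
  then show ?thesis using imm q by (meson injD)
qed

lemma Gm_inj: "q \<in> U \<Longrightarrow> inj ((*v) (Gm q))"
proof (rule injI)
  fix x y assume q: "q \<in> U" and e: "Gm q *v x = Gm q *v y"
  have "Gm q *v (x - y) = 0" using e by (simp add: matrix_vector_mult_diff_distrib)
  then have "\<And>a. (\<Sum>b\<in>UNIV. gm q a b * (x - y) $ b) = 0"
    by (simp add: Gm_def matrix_vector_mult_def vec_eq_iff)
  then have "x - y = 0" by (rule gram_zero[OF q])
  then show "x = y" by simp
qed

lemma Gm_invertible: assumes "q \<in> U" shows "invertible (Gm q)"
proof -
  have "det (matrix ((*v) (Gm q))) \<noteq> 0"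
    using det_nz_iff_inj[OF matrix_vector_mul_linear] Gm_inj[OF assms] by blast
  then show ?thesis unfolding matrix_of_matrix_vector_mul invertible_det_nz .
qed

lemma Gm_det: "q \<in> U \<Longrightarrow> det (Gm q) \<noteq> 0"
  using Gm_invertible invertible_det_nz by blast

lemma Gm_minv: "q \<in> U \<Longrightarrow> Gm q ** matrix_inv (Gm q) = mat 1 \<and> matrix_inv (Gm q) ** Gm q = mat 1"
  using Gm_invertible unfolding invertible_def matrix_inv_def by (rule someI_ex)

lemma ginv_Gm: "ginv X q i j = matrix_inv (Gm q) $ i $ j"
  unfolding ginv_def Gm_def ..

lemma ginv_right: "q \<in> U \<Longrightarrow> (\<Sum>j\<in>UNIV. gm q i j * gi q j k) = (if i = k then 1 else 0)"
  using Gm_minv[of q] unfolding ginv_Gm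
  by (auto simp: matrix_matrix_mult_def mat_def vec_eq_iff Gm_def)

lemma ginv_left: "q \<in> U \<Longrightarrow> (\<Sum>j\<in>UNIV. gi q i j * gm q j k) = (if i = k then 1 else 0)"
  using Gm_minv[of q] unfolding ginv_Gm
  by (auto simp: matrix_matrix_mult_def mat_def vec_eq_iff Gm_def)

lemma gm_sym: "gm q i j = gm q j i"
  unfolding metric_def by (simp add: inner_commute)

lemma gi_sym: assumes q: "q \<in> U" shows "gi q i j = gi q j i"
proof -
  let ?B = "matrix_inv (Gm q)"
  have tG: "transpose (Gm q) = Gm q" by (simp add: Gm_def transpose_def vec_eq_iff gm_sym)
  have "Gm q ** transpose ?B = transpose (?B ** Gm q)" by (simp add: matrix_transpose_mul tG)
  then have r: "Gm q ** transpose ?B = mat 1" using Gm_minv[OF q] by (simp add: transpose_mat)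
  have "transpose ?B = (?B ** Gm q) ** transpose ?B" using Gm_minv[OF q] by simp
  also have "\<dots> = ?B ** (Gm q ** transpose ?B)" by (simp add: matrix_mul_assoc)
  also have "\<dots> = ?B" using r by simp
  finally show ?thesis unfolding ginv_Gm by (metis transpose_transpose transpose_def vec_lambda_beta)
qed

lemma ginv_cramer:
  assumes q: "q \<in> U"
  shows "gi q i j = det (\<chi> a b. if b = i then (if a = j then 1 else 0) else gm q a b) / det (Gm q)"
proof -
  let ?x = "matrix_inv (Gm q) *v axis j 1"
  have "Gm q *v ?x = axis j 1" using Gm_minv[OF q] by (simp add: matrix_vector_mul_assoc)
  then have "?x = (\<chi> k. det (\<chi> a b. if b = k then axis j 1 $ a else Gm q $ a $ b) / det (Gm q))"
    using cramer[OF Gm_det[OF q]] by blast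
  then have "?x $ i = det (\<chi> a b. if b = i then axis j 1 $ a else Gm q $ a $ b) / det (Gm q)" by simp
  moreover have "?x $ i = gi q i j" by (simp add: mat_axis ginv_Gm)
  moreover have "(\<chi> a b. if b = i then axis j 1 $ a else Gm q $ a $ b) =
      (\<chi> a b. if b = i then (if a = j then 1 else 0) else gm q a b)"
    by (simp add: Gm_def axis_def vec_eq_iff)
  ultimately show ?thesis by simp
qed

lemma smooth_Xk: "smooth_on U (pd k X)"
  by (rule smooth_pd[OF Xs])

lemma smooth_Xkl: "smooth_on U (pd k (pd l X))"
  by (intro smooth_pd Xs)

lemma smooth_nuk: "smooth_on U (pd k nu)"
  by (rule smooth_pd[OF nus])

lemma smooth_gm: "smooth_on U (\<lambda>q. gm q i j)"
  unfolding metric_def by (intro smooth_inner[OF U] smooth_Xk)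

lemma smooth_if: "smooth_on U f \<Longrightarrow> smooth_on U g \<Longrightarrow> smooth_on U (\<lambda>x. if P then f x else g x)"
  by (cases P) auto

lemma Gm_det': "q \<in> U \<Longrightarrow> det (\<chi> a b. gm q a b) \<noteq> 0"
  using Gm_det unfolding Gm_def .

lemma smooth_gi: "smooth_on U (\<lambda>q. gi q i j)"
proof (rule smooth_cong[OF U])
  show "smooth_on U (\<lambda>q. det (\<chi> a b. if b = i then (if a = j then 1 else 0) else gm q a b) / det (Gm q))"
    by (intro smooth_divide[OF U] smooth_det[OF U])
      (auto simp: Gm_def Gm_det' smooth_const[OF U] smooth_gm intro!: smooth_if)
  show "\<forall>q\<in>U. det (\<chi> a b. if b = i then (if a = j then 1 else 0) else gm q a b) / det (Gm q) = gi q i j"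
    using ginv_cramer by simp
qed

lemma tangent_decomp:
  assumes q: "q \<in> U"
  shows "(\<Sum>k\<in>UNIV. \<Sum>l\<in>UNIV. (gi q k l * (w \<bullet> pd k X q)) *\<^sub>R pd l X q) + (w \<bullet> nu q) *\<^sub>R nu q = w"
proof -
  define t where "t = (\<Sum>k\<in>UNIV. \<Sum>l\<in>UNIV. (gi q k l * (w \<bullet> pd k X q)) *\<^sub>R pd l X q)"
  define z where "z = w - (w \<bullet> nu q) *\<^sub>R nu q - t"
  have tX: "t \<bullet> pd j X q = w \<bullet> pd j X q" for j
  proof -
    have "t \<bullet> pd j X q = (\<Sum>k\<in>UNIV. (w \<bullet> pd k X q) * (\<Sum>l\<in>UNIV. gi q k l * gm q l j))"
      unfolding t_def metric_def
      by (simp add: inner_sum_left sum_distrib_left mult.assoc mult.left_commute)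
    also have "\<dots> = w \<bullet> pd j X q" using ginv_left[OF q] by simp
    finally show ?thesis .
  qed
  have tnu: "t \<bullet> nu q = 0" unfolding t_def using Xnu[OF q] by (simp add: inner_sum_left)
  have zX: "z \<bullet> pd j X q = 0" for j unfolding z_def using tX nuX[OF q] by (simp add: inner_diff_left)
  have znu: "z \<bullet> nu q = 0" unfolding z_def using tnu nunu[OF q] by (simp add: inner_diff_left)
  have "z = 0"
  proof (rule ccontr)
    assume z0: "z \<noteq> 0"
    define B where "B = fd X q ` Basis"
    have lin: "linear (fd X q)" by (rule linear_frechet_derivative[OF X_diff[OF q]])
    have injf: "inj (fd X q)" using imm q by blast
    have indB: "independent B" unfolding B_def using lin injf
      by (simp add: Linear_Algebra.independent_Basis linear_independent_injective_image)
    have cardB: "card B = CARD('n)" unfolding B_def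
      using card_image[OF inj_on_subset[OF injf subset_UNIV], of Basis] by simp
    have finB: "finite B" unfolding B_def by simp
    have Bel: "\<And>b. b \<in> B \<Longrightarrow> \<exists>k. b = pd k X q"
      unfolding B_def Basis_vec_def pd_def by auto
    have orth_nu: "\<And>b. b \<in> B \<Longrightarrow> orthogonal (nu q) b"
      using Bel nuX[OF q] unfolding orthogonal_def by blast
    have nuB: "nu q \<notin> span B"
    proof
      assume "nu q \<in> span B"
      then have "orthogonal (nu q) (nu q)" by (rule orthogonal_to_span) (rule orth_nu)
      then show False using nunu[OF q] unfolding orthogonal_def by simp
    qed
    have orth_z: "\<And>b. b \<in> insert (nu q) B \<Longrightarrow> orthogonal z b"
      unfolding orthogonal_def
    proof -
      fix b assume "b \<in> insert (nu q) B"
      then show "z \<bullet> b = 0"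
      proof
        assume "b = nu q" then show ?thesis using znu by simp
      next
        assume "b \<in> B" then obtain k where "b = pd k X q" using Bel by blast
        then show ?thesis using zX by simp
      qed
    qed
    have zB: "z \<notin> span (insert (nu q) B)"
    proof
      assume "z \<in> span (insert (nu q) B)"
      then have "orthogonal z z" by (rule orthogonal_to_span) (rule orth_z)
      then show False using z0 unfolding orthogonal_def by simp
    qed
    have ind: "independent (insert z (insert (nu q) B))"
      by (intro independent_insertI zB nuB indB)
    have "nu q \<notin> B" using nuB span_base by blast
    moreover have "z \<notin> insert (nu q) B" using zB span_base by blast
    ultimately have "card (insert z (insert (nu q) B)) = CARD('n) + 2"
      using finB cardB by simp
    moreover have "card (insert z (insert (nu q) B)) \<le> CARD('m)"
      using independent_bound[OF ind] by simp
    ultimately show False using dimm by simp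
  qed
  then show ?thesis unfolding z_def t_def by (simp add: algebra_simps)
qed

end


lemma sum4_swap:
  "(\<Sum>k\<in>A. \<Sum>l\<in>B. \<Sum>k'\<in>C. \<Sum>r\<in>E. F k l k' r) = (\<Sum>k'\<in>C. \<Sum>r\<in>E. \<Sum>k\<in>A. \<Sum>l\<in>B. F k l k' r)"
proof -
  have "(\<Sum>k\<in>A. \<Sum>l\<in>B. \<Sum>k'\<in>C. \<Sum>r\<in>E. F k l k' r) = (\<Sum>k\<in>A. \<Sum>k'\<in>C. \<Sum>l\<in>B. \<Sum>r\<in>E. F k l k' r)"
    by (rule sum.cong[OF refl], rule sum.swap)
  also have "\<dots> = (\<Sum>k'\<in>C. \<Sum>k\<in>A. \<Sum>l\<in>B. \<Sum>r\<in>E. F k l k' r)" by (rule sum.swap)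
  also have "\<dots> = (\<Sum>k'\<in>C. \<Sum>k\<in>A. \<Sum>r\<in>E. \<Sum>l\<in>B. F k l k' r)"
    by (rule sum.cong[OF refl], rule sum.cong[OF refl], rule sum.swap)
  also have "\<dots> = (\<Sum>k'\<in>C. \<Sum>r\<in>E. \<Sum>k\<in>A. \<Sum>l\<in>B. F k l k' r)"
    by (rule sum.cong[OF refl], rule sum.swap)
  finally show ?thesis .
qed

context hs
begin

definition up :: "real^'n \<Rightarrow> ('n \<Rightarrow> real) \<Rightarrow> real^'m" where
  "up q A = (\<Sum>k\<in>UNIV. \<Sum>l\<in>UNIV. (gi q k l * A l) *\<^sub>R pd k X q)"

definition up2 :: "real^'n \<Rightarrow> ('n \<Rightarrow> 'n \<Rightarrow> real) \<Rightarrow> 'm \<Rightarrow> 'm \<Rightarrow> real" where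
  "up2 q H a b = up q (\<lambda>l. up q (\<lambda>r. H l r) $ b) $ a"

lemma up_comp: "up q A $ a = (\<Sum>k\<in>UNIV. \<Sum>l\<in>UNIV. gi q k l * A l * pd k X q $ a)"
  by (simp add: up_def sum_component)

lemma up_inner_v: "up q A \<bullet> v = (\<Sum>k\<in>UNIV. \<Sum>l\<in>UNIV. gi q k l * A l * (pd k X q \<bullet> v))"
  by (simp add: up_def inner_sum_left)

lemma up_X: assumes q: "q \<in> U" shows "up q A \<bullet> pd j X q = A j"
proof -
  have "up q A \<bullet> pd j X q = (\<Sum>k\<in>UNIV. \<Sum>l\<in>UNIV. gi q k l * A l * gm q k j)"
    by (simp add: up_inner_v metric_def)
  also have "\<dots> = (\<Sum>l\<in>UNIV. \<Sum>k\<in>UNIV. gi q k l * A l * gm q k j)" by (rule sum.swap)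
  also have "\<dots> = (\<Sum>l\<in>UNIV. A l * (\<Sum>k\<in>UNIV. gi q l k * gm q k j))"
    by (simp add: sum_distrib_left gi_sym[OF q, of _ l for l] mult_ac)
  also have "\<dots> = A j" by (simp add: ginv_left[OF q])
  finally show ?thesis .
qed

lemma up_nu: assumes q: "q \<in> U" shows "up q A \<bullet> nu q = 0"
  by (simp add: up_inner_v Xnu[OF q])

lemma up_inner: assumes q: "q \<in> U"
  shows "up q A \<bullet> up q B = (\<Sum>l\<in>UNIV. \<Sum>l'\<in>UNIV. gi q l l' * A l * B l')"
proof -
  have "up q A \<bullet> up q B = (\<Sum>k\<in>UNIV. \<Sum>l\<in>UNIV. gi q k l * A l * (pd k X q \<bullet> up q B))"
    by (rule up_inner_v)
  also have "\<dots> = (\<Sum>k\<in>UNIV. \<Sum>l\<in>UNIV. gi q k l * A l * B k)"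
    by (simp add: inner_commute[of "pd k X q" "up q B" for k] up_X[OF q])
  also have "\<dots> = (\<Sum>l\<in>UNIV. \<Sum>k\<in>UNIV. gi q k l * A l * B k)" by (rule sum.swap)
  also have "\<dots> = (\<Sum>l\<in>UNIV. \<Sum>l'\<in>UNIV. gi q l l' * A l * B l')"
    by (simp add: gi_sym[OF q, of _ l for l])
  finally show ?thesis .
qed

lemma tangent_up: assumes q: "q \<in> U"
  shows "w = up q (\<lambda>r. w \<bullet> pd r X q) + (w \<bullet> nu q) *\<^sub>R nu q"
proof -
  have "up q (\<lambda>r. w \<bullet> pd r X q) = (\<Sum>k\<in>UNIV. \<Sum>l\<in>UNIV. (gi q k l * (w \<bullet> pd k X q)) *\<^sub>R pd l X q)"
    unfolding up_def by (subst sum.swap) (simp add: gi_sym[OF q, of _ l for l])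
  then show ?thesis using tangent_decomp[OF q, of w] by simp
qed

lemma up_add: "up q (\<lambda>l. A l + B l) = up q A + up q B"
  by (simp add: up_def algebra_simps sum.distrib)

lemma up_diff: "up q (\<lambda>l. A l - B l) = up q A - up q B"
  by (simp add: up_def algebra_simps sum_subtractf)

lemma up_scale: "up q (\<lambda>l. c * A l) = c *\<^sub>R up q A"
  by (simp add: up_def scaleR_sum_right mult_ac)

lemma up_sum: "finite I \<Longrightarrow> up q (\<lambda>l. \<Sum>c\<in>I. F c l) = (\<Sum>c\<in>I. up q (F c))"
  by (induction I rule: finite_induct) (simp_all add: up_add, simp add: up_def)

lemma up_cong: "(\<And>l. A l = B l) \<Longrightarrow> up q A = up q B"
  by (simp add: up_def)

lemma up2_expand: "up2 q H a b = (\<Sum>k\<in>UNIV. \<Sum>l\<in>UNIV. \<Sum>k'\<in>UNIV. \<Sum>r\<in>UNIV.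
     gi q k l * gi q k' r * H l r * pd k X q $ a * pd k' X q $ b)"
  by (simp add: up2_def up_comp sum_distrib_left sum_distrib_right mult_ac)

lemma up2_sym: assumes q: "q \<in> U" and H: "\<And>l r. H l r = H r l"
  shows "up2 q H a b = up2 q H b a"
proof -
  have "up2 q H b a = (\<Sum>k'\<in>UNIV. \<Sum>r\<in>UNIV. \<Sum>k\<in>UNIV. \<Sum>l\<in>UNIV.
     gi q k l * gi q k' r * H l r * pd k X q $ b * pd k' X q $ a)"
    unfolding up2_expand by (rule sum4_swap)
  also have "\<dots> = up2 q H a b"
    unfolding up2_expand by (intro sum.cong refl) (simp add: H mult_ac)
  finally show ?thesis by simp
qed

lemma up2_trace: assumes q: "q \<in> U"
  shows "(\<Sum>a\<in>UNIV. up2 q H a a) = (\<Sum>l\<in>UNIV. \<Sum>r\<in>UNIV. gi q l r * H l r)"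
proof -
  have "(\<Sum>a\<in>UNIV. up2 q H a a) = (\<Sum>a\<in>UNIV. up q (\<lambda>l. up q (H l) $ a) $ a)"
    by (simp add: up2_def)
  also have "\<dots> = (\<Sum>a\<in>UNIV. \<Sum>k\<in>UNIV. \<Sum>l\<in>UNIV. gi q k l * (up q (H l) $ a * pd k X q $ a))"
    by (simp add: up_comp mult_ac)
  also have "\<dots> = (\<Sum>k\<in>UNIV. \<Sum>l\<in>UNIV. gi q k l * (up q (H l) \<bullet> pd k X q))"
    by (subst sum.swap, rule sum.cong[OF refl], subst sum.swap)
      (simp add: inner_vec_def sum_distrib_left)
  also have "\<dots> = (\<Sum>k\<in>UNIV. \<Sum>l\<in>UNIV. gi q k l * H l k)" by (simp add: up_X[OF q])
  also have "\<dots> = (\<Sum>l\<in>UNIV. \<Sum>r\<in>UNIV. gi q l r * H l r)"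
    by (subst sum.swap) (simp add: gi_sym[OF q, of _ l for l])
  finally show ?thesis .
qed

lemma up_comp_inner: "(\<Sum>a\<in>UNIV. up q A $ a * up q B $ a) = up q A \<bullet> up q B"
  by (simp add: inner_vec_def)

lemma up2_inner: assumes q: "q \<in> U"
  shows "(\<Sum>a\<in>UNIV. \<Sum>b\<in>UNIV. up2 q H a b * up2 q K a b) =
    (\<Sum>i\<in>UNIV. \<Sum>j\<in>UNIV. \<Sum>k\<in>UNIV. \<Sum>l\<in>UNIV. gi q i k * gi q j l * H i j * K k l)"
proof -
  have "(\<Sum>a\<in>UNIV. \<Sum>b\<in>UNIV. up2 q H a b * up2 q K a b) = (\<Sum>b\<in>UNIV. \<Sum>a\<in>UNIV. up2 q H a b * up2 q K a b)"
    by (rule sum.swap)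
  also have "\<dots> = (\<Sum>b\<in>UNIV. \<Sum>i\<in>UNIV. \<Sum>k\<in>UNIV. gi q i k * (up q (H i) $ b * up q (K k) $ b))"
    unfolding up2_def up_comp_inner up_inner[OF q] by (simp add: mult_ac)
  also have "\<dots> = (\<Sum>i\<in>UNIV. \<Sum>k\<in>UNIV. gi q i k * (up q (H i) \<bullet> up q (K k)))"
    by (subst sum.swap, rule sum.cong[OF refl], subst sum.swap)
      (simp add: inner_vec_def sum_distrib_left)
  also have "\<dots> = (\<Sum>i\<in>UNIV. \<Sum>k\<in>UNIV. \<Sum>j\<in>UNIV. \<Sum>l\<in>UNIV. gi q i k * gi q j l * H i j * K k l)"
    by (simp add: up_inner[OF q] sum_distrib_left mult_ac)
  also have "\<dots> = (\<Sum>i\<in>UNIV. \<Sum>j\<in>UNIV. \<Sum>k\<in>UNIV. \<Sum>l\<in>UNIV. gi q i k * gi q j l * H i j * K k l)"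
    by (rule sum.cong[OF refl], rule sum.swap)
  finally show ?thesis .
qed


definition grad :: "(real^'n \<Rightarrow> real) \<Rightarrow> real^'n \<Rightarrow> real^'m" where
  "grad f q = up q (\<lambda>l. pd l f q)"

definition D :: "'m \<Rightarrow> (real^'n \<Rightarrow> real) \<Rightarrow> real^'n \<Rightarrow> real" where
  "D a f q = grad f q $ a"

definition S :: "'m \<Rightarrow> 'm \<Rightarrow> real^'n \<Rightarrow> real" where
  "S a c q = D a (\<lambda>q. nu q $ c) q"

lemma smooth_up: "(\<And>l. smooth_on U (\<lambda>q. A q l)) \<Longrightarrow> smooth_on U (\<lambda>q. up q (A q))"
  unfolding up_def
  by (intro smooth_sum[OF U] smooth_scaleR[OF U] smooth_mult[OF U] smooth_gi smooth_Xk) auto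

lemma smooth_grad: "smooth_on U f \<Longrightarrow> smooth_on U (grad f)"
  unfolding grad_def[abs_def] by (intro smooth_up smooth_pd)

lemma smooth_D: "smooth_on U f \<Longrightarrow> smooth_on U (D a f)"
  unfolding D_def[abs_def] by (intro smooth_component[OF U] smooth_grad)

lemma smooth_nuc: "smooth_on U (\<lambda>q. nu q $ c)"
  by (rule smooth_component[OF U nus])

lemma smooth_Xc: "smooth_on U (\<lambda>q. X q $ c)"
  by (rule smooth_component[OF U Xs])

lemma smooth_S: "smooth_on U (S a c)"
  unfolding S_def[abs_def] by (intro smooth_D smooth_nuc)

lemma D_up: "D a f q = up q (\<lambda>l. pd l f q) $ a"
  by (simp add: D_def grad_def)

lemma D_lin:
  assumes "\<And>l. pd l h q = \<alpha> * pd l f q + \<beta> * pd l g q"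
  shows "D a h q = \<alpha> * D a f q + \<beta> * D a g q"
proof -
  have "D a h q = up q (\<lambda>l. \<alpha> * pd l f q + \<beta> * pd l g q) $ a" by (simp add: D_up assms)
  also have "\<dots> = \<alpha> * D a f q + \<beta> * D a g q" by (simp add: up_add up_scale D_up)
  finally show ?thesis .
qed

lemma D_local: "\<forall>y\<in>U. f y = g y \<Longrightarrow> q \<in> U \<Longrightarrow> D a f q = D a g q"
  unfolding D_up using smooth_pd_local[OF U] by (metis (no_types, lifting) up_cong)

lemma D_add: "smooth_on U f \<Longrightarrow> smooth_on U g \<Longrightarrow> q \<in> U \<Longrightarrow> D a (\<lambda>q. f q + g q) q = D a f q + D a g q"
  using D_lin[of "\<lambda>q. f q + g q" q 1 f 1 g] by (simp add: pd_add smooth_da[OF U])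

lemma D_diff: "smooth_on U f \<Longrightarrow> smooth_on U g \<Longrightarrow> q \<in> U \<Longrightarrow> D a (\<lambda>q. f q - g q) q = D a f q - D a g q"
  using D_lin[of "\<lambda>q. f q - g q" q 1 f "-1" g] by (simp add: pd_diff smooth_da[OF U])

lemma D_mult: "smooth_on U f \<Longrightarrow> smooth_on U g \<Longrightarrow> q \<in> U \<Longrightarrow>
   D a (\<lambda>q. f q * g q) q = D a f q * g q + f q * D a g q"
  using D_lin[of "\<lambda>q. f q * g q" q "g q" f "f q" g] by (simp add: pd_mult smooth_da[OF U] mult_ac)

lemma D_const: "D a (\<lambda>q. c) q = 0"
  unfolding D_up by (simp add: up_def)

lemma D_cmult: "smooth_on U f \<Longrightarrow> q \<in> U \<Longrightarrow> D a (\<lambda>q. c * f q) q = c * D a f q"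
  using D_mult[OF smooth_const[OF U] _, of f q a c] by (simp add: D_const)

lemma D_minus: "smooth_on U f \<Longrightarrow> q \<in> U \<Longrightarrow> D a (\<lambda>q. - f q) q = - D a f q"
  using D_cmult[of f q a "-1"] by simp

lemma D_sum: "finite I \<Longrightarrow> (\<And>c. c \<in> I \<Longrightarrow> smooth_on U (f c)) \<Longrightarrow> q \<in> U \<Longrightarrow>
   D a (\<lambda>q. \<Sum>c\<in>I. f c q) q = (\<Sum>c\<in>I. D a (f c) q)"
proof -
  assume I: "finite I" and f: "\<And>c. c \<in> I \<Longrightarrow> smooth_on U (f c)" and q: "q \<in> U"
  have "D a (\<lambda>q. \<Sum>c\<in>I. f c q) q = up q (\<lambda>l. \<Sum>c\<in>I. pd l (f c) q) $ a"
    unfolding D_up using f q by (simp add: pd_sum[OF I] smooth_da[OF U])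
  also have "\<dots> = (\<Sum>c\<in>I. D a (f c) q)" by (simp add: up_sum[OF I] sum_component D_up)
  finally show ?thesis .
qed

lemma D_nu: assumes q: "q \<in> U" shows "(\<Sum>a\<in>UNIV. nu q $ a * D a f q) = 0"
  using up_nu[OF q, of "\<lambda>l. pd l f q"] by (simp add: D_up inner_vec_def mult_ac)

lemma inner_axis1: "v \<bullet> axis b (1::real) = v $ b"
  by (simp add: inner_axis)

lemma D_X: assumes q: "q \<in> U"
  shows "D a (\<lambda>q. X q $ b) q = (if a = b then 1 else 0) - nu q $ a * nu q $ b"
proof -
  have "D a (\<lambda>q. X q $ b) q = up q (\<lambda>r. axis b 1 \<bullet> pd r X q) $ a"
    unfolding D_up
    by (simp add: pd_component[OF X_diff[OF q]] inner_commute[of "axis b 1"] inner_axis1)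
  also have "\<dots> = axis b 1 $ a - (axis b 1 \<bullet> nu q) * nu q $ a"
    using tangent_up[OF q, of "axis b 1"] by (simp add: vec_eq_iff)
  also have "\<dots> = (if a = b then 1 else 0) - nu q $ a * nu q $ b"
    by (simp add: inner_commute[of "axis b 1"] inner_axis1) (simp add: axis_def)
  finally show ?thesis .
qed

lemma nu_l_perp: assumes q: "q \<in> U" shows "pd l nu q \<bullet> nu q = 0"
proof -
  have "pd l (\<lambda>q. nu q \<bullet> nu q) q = pd l (\<lambda>q. 1) q"
    by (rule smooth_pd_local[OF U _ q]) (use nunu in auto)
  then have "pd l nu q \<bullet> nu q + nu q \<bullet> pd l nu q = 0"
    by (simp add: pd_inner smooth_da[OF U nus q])
  then show ?thesis by (simp add: inner_commute)
qed

lemma hX: assumes q: "q \<in> U" shows "pd l nu q \<bullet> pd r X q = - (nu q \<bullet> pd l (pd r X) q)"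
proof -
  have "pd l (\<lambda>q. nu q \<bullet> pd r X q) q = pd l (\<lambda>q. 0) q"
    by (rule smooth_pd_local[OF U _ q]) (use nuX in auto)
  then have "pd l nu q \<bullet> pd r X q + nu q \<bullet> pd l (pd r X) q = 0"
    by (simp add: pd_inner smooth_da[OF U nus q] smooth_da[OF U smooth_Xk q])
  then show ?thesis by simp
qed

lemma h_sym: assumes q: "q \<in> U" shows "pd l nu q \<bullet> pd r X q = pd r nu q \<bullet> pd l X q"
  using hX[OF q, of l r] hX[OF q, of r l] smooth_schwarz_vec[OF U Xs q, of l r] by simp

lemma nu_l_up: assumes q: "q \<in> U" shows "pd l nu q = up q (\<lambda>r. pd l nu q \<bullet> pd r X q)"
  using tangent_up[OF q, of "pd l nu q"] nu_l_perp[OF q] by simp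

lemma S_up2: assumes q: "q \<in> U" shows "S a c q = up2 q (\<lambda>l r. pd l nu q \<bullet> pd r X q) a c"
proof -
  have "S a c q = up q (\<lambda>l. pd l nu q $ c) $ a"
    unfolding S_def D_up by (simp add: pd_component[OF smooth_da[OF U nus q]])
  also have "\<dots> = up2 q (\<lambda>l r. pd l nu q \<bullet> pd r X q) a c"
    unfolding up2_def by (subst nu_l_up[OF q]) simp
  finally show ?thesis .
qed

lemma S_sym: assumes q: "q \<in> U" shows "S a c q = S c a q"
  unfolding S_up2[OF q] by (rule up2_sym[OF q h_sym[OF q]])

lemma nu_S: assumes q: "q \<in> U" shows "(\<Sum>a\<in>UNIV. nu q $ a * S a c q) = 0"
  unfolding S_def by (rule D_nu[OF q])

lemma S_nu: assumes q: "q \<in> U" shows "(\<Sum>c\<in>UNIV. S a c q * nu q $ c) = 0"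
  using nu_S[OF q, of a] by (simp add: S_sym[OF q, of a] mult.commute)

end


context hs
begin

lemma D_eq: "D b f = (\<lambda>q. grad f q $ b)"
  by (simp add: D_def[abs_def])

lemma up_inner_v': "up q A \<bullet> v = (\<Sum>m\<in>UNIV. (\<Sum>k\<in>UNIV. gi q m k * (v \<bullet> pd k X q)) * A m)"
  if q: "q \<in> U"
proof -
  have "up q A \<bullet> v = (\<Sum>k\<in>UNIV. \<Sum>m\<in>UNIV. gi q k m * A m * (pd k X q \<bullet> v))" by (rule up_inner_v)
  also have "\<dots> = (\<Sum>m\<in>UNIV. \<Sum>k\<in>UNIV. gi q k m * A m * (pd k X q \<bullet> v))" by (rule sum.swap)
  also have "\<dots> = (\<Sum>m\<in>UNIV. (\<Sum>k\<in>UNIV. gi q m k * (v \<bullet> pd k X q)) * A m)"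
    by (simp add: sum_distrib_right sum_distrib_left gi_sym[OF q, of _ m for m] inner_commute[of v] mult_ac)
  finally show ?thesis .
qed

lemma S_up: assumes q: "q \<in> U" shows "S a c q = up q (\<lambda>l. pd l nu q $ c) $ a"
  unfolding S_def D_up by (simp add: pd_component[OF smooth_da[OF U nus q]])

lemma hess_conv:
  assumes f: "smooth_on U f" and q: "q \<in> U"
  shows "D a (D b f) q = up2 q (hess_fun X f q) a b - nu q $ b * (\<Sum>c\<in>UNIV. S a c q * D c f q)"
proof -
  define G where "G = grad f"
  have Gs: "smooth_on U G" unfolding G_def by (rule smooth_grad[OF f])
  have Gd: "G differentiable at q" by (rule smooth_da[OF U Gs q])
  have Db: "D b f = (\<lambda>y. G y $ b)" unfolding G_def by (rule D_eq)
  have 1: "D a (D b f) q = up q (\<lambda>l. pd l G q $ b) $ a"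
    by (simp add: D_up Db pd_component[OF Gd])
  have wX: "pd l G q \<bullet> pd r X q = hess_fun X f q l r" for l r
  proof -
    have "pd l (\<lambda>y. G y \<bullet> pd r X y) q = pd l (pd r f) q"
      by (rule smooth_pd_local[OF U _ q]) (simp add: G_def grad_def up_X)
    then have "pd l G q \<bullet> pd r X q + G q \<bullet> pd l (pd r X) q = pd l (pd r f) q"
      by (simp add: pd_inner Gd smooth_da[OF U smooth_Xk q])
    moreover have "G q \<bullet> pd l (pd r X) q = (\<Sum>m\<in>UNIV. christoffel X q m l r * pd m f q)"
      unfolding G_def grad_def up_inner_v'[OF q] christoffel_def ..
    ultimately show ?thesis unfolding hess_fun_def by simp
  qed
  have wnu: "pd l G q \<bullet> nu q = - (G q \<bullet> pd l nu q)" for l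
  proof -
    have "pd l (\<lambda>y. G y \<bullet> nu y) q = pd l (\<lambda>y. 0) q"
      by (rule smooth_pd_local[OF U _ q]) (simp add: G_def grad_def up_nu)
    then have "pd l G q \<bullet> nu q + G q \<bullet> pd l nu q = 0"
      by (simp add: pd_inner Gd smooth_da[OF U nus q])
    then show ?thesis by simp
  qed
  have 2: "pd l G q $ b = up q (hess_fun X f q l) $ b - nu q $ b * (G q \<bullet> pd l nu q)" for l
  proof -
    have "pd l G q = up q (\<lambda>r. pd l G q \<bullet> pd r X q) + (pd l G q \<bullet> nu q) *\<^sub>R nu q"
      by (rule tangent_up[OF q])
    then show ?thesis by (simp add: wX wnu)
  qed
  have 3: "up q (\<lambda>l. G q \<bullet> pd l nu q) $ a = (\<Sum>c\<in>UNIV. S a c q * D c f q)"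
  proof -
    have "up q (\<lambda>l. G q \<bullet> pd l nu q) = up q (\<lambda>l. \<Sum>c\<in>UNIV. G q $ c * pd l nu q $ c)"
      by (simp add: inner_vec_def)
    also have "\<dots> = (\<Sum>c\<in>UNIV. G q $ c *\<^sub>R up q (\<lambda>l. pd l nu q $ c))"
      by (simp add: up_sum up_scale)
    finally show ?thesis
      by (simp add: sum_component S_up[OF q] D_def G_def mult.commute)
  qed
  have "D a (D b f) q = up q (\<lambda>l. up q (hess_fun X f q l) $ b - nu q $ b * (G q \<bullet> pd l nu q)) $ a"
    unfolding 1 2 ..
  also have "\<dots> = up2 q (hess_fun X f q) a b - nu q $ b * up q (\<lambda>l. G q \<bullet> pd l nu q) $ a"
    by (simp add: up_diff up_scale up2_def)
  finally show ?thesis unfolding 3 .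
qed

lemma christoffel_sym: "q \<in> U \<Longrightarrow> christoffel X q m l r = christoffel X q m r l"
  unfolding christoffel_def using smooth_schwarz_vec[OF U Xs] by simp

lemma hess_sym: "smooth_on U f \<Longrightarrow> q \<in> U \<Longrightarrow> hess_fun X f q l r = hess_fun X f q r l"
  unfolding hess_fun_def using smooth_schwarz[OF U, of f q l r] christoffel_sym by simp

lemma lap_D: assumes f: "smooth_on U f" and q: "q \<in> U"
  shows "laplacian X f q = (\<Sum>a\<in>UNIV. D a (D a f) q)"
proof -
  have "(\<Sum>a\<in>UNIV. D a (D a f) q) = (\<Sum>a\<in>UNIV. up2 q (hess_fun X f q) a a)
      - (\<Sum>a\<in>UNIV. nu q $ a * (\<Sum>c\<in>UNIV. S a c q * D c f q))"
    by (simp add: hess_conv[OF f q] sum_subtractf)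
  also have "(\<Sum>a\<in>UNIV. nu q $ a * (\<Sum>c\<in>UNIV. S a c q * D c f q)) =
      (\<Sum>c\<in>UNIV. (\<Sum>a\<in>UNIV. nu q $ a * S a c q) * D c f q)"
    by (simp add: sum_distrib_left sum_distrib_right mult_ac) (rule sum.swap)
  also have "\<dots> = 0" by (simp add: nu_S[OF q])
  finally show ?thesis by (simp add: up2_trace[OF q] laplacian_def)
qed

lemma comm_D: assumes f: "smooth_on U f" and q: "q \<in> U"
  shows "D a (D b f) q - D b (D a f) q =
     nu q $ a * (\<Sum>c\<in>UNIV. S b c q * D c f q) - nu q $ b * (\<Sum>c\<in>UNIV. S a c q * D c f q)"
  using up2_sym[OF q, of "hess_fun X f q" a b] hess_sym[OF f q] by (simp add: hess_conv[OF f q])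


lemma up2_diff: "up2 q (\<lambda>l r. H l r - K l r) a b = up2 q H a b - up2 q K a b"
  unfolding up2_def by (simp add: up_diff up_cong[of "\<lambda>l. up q (\<lambda>r. H l r - K l r) $ b"])

lemma up2_scale: "up2 q (\<lambda>l r. H l r * \<alpha>) a b = up2 q H a b * \<alpha>"
proof -
  have "up2 q (\<lambda>l r. H l r * \<alpha>) a b = up2 q (\<lambda>l r. \<alpha> * H l r) a b" by (simp add: mult.commute)
  also have "\<dots> = \<alpha> * up2 q H a b" unfolding up2_def by (simp add: up_scale)
  finally show ?thesis by simp
qed

lemma up2_sum: fixes F :: "'c::finite \<Rightarrow> 'n \<Rightarrow> 'n \<Rightarrow> real" shows "up2 q (\<lambda>l r. \<Sum>c\<in>UNIV. F c l r) a b = (\<Sum>c\<in>UNIV. up2 q (F c) a b)"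
proof -
  have 1: "up q (\<lambda>r. \<Sum>c\<in>UNIV. F c l r) = (\<Sum>c\<in>UNIV. up q (F c l))" for l
    using up_sum[of UNIV q "\<lambda>c r. F c l r"] by simp
  have 2: "up q (\<lambda>l. \<Sum>c\<in>UNIV. up q (F c l) $ b) = (\<Sum>c\<in>UNIV. up q (\<lambda>l. up q (F c l) $ b))"
    using up_sum[of UNIV q "\<lambda>c l. up q (F c l) $ b"] by simp
  show ?thesis unfolding up2_def 1 by (simp add: sum_component 2)
qed

lemma energy_eq: assumes q: "q \<in> U"
  shows "energy_density X nu q = (\<Sum>a\<in>UNIV. \<Sum>c\<in>UNIV. S a c q * S a c q)"
proof -
  have "(\<Sum>a\<in>UNIV. \<Sum>c\<in>UNIV. S a c q * S a c q) = (\<Sum>c\<in>UNIV. \<Sum>a\<in>UNIV. S a c q * S a c q)"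
    by (rule sum.swap)
  also have "\<dots> = (\<Sum>c\<in>UNIV. \<Sum>l\<in>UNIV. \<Sum>l'\<in>UNIV. gi q l l' * (pd l nu q $ c * pd l' nu q $ c))"
    by (simp add: S_up[OF q] up_comp_inner up_inner[OF q] mult_ac)
  also have "\<dots> = (\<Sum>l\<in>UNIV. \<Sum>l'\<in>UNIV. gi q l l' * (pd l nu q \<bullet> pd l' nu q))"
    by (subst sum.swap, rule sum.cong[OF refl], subst sum.swap) (simp add: inner_vec_def sum_distrib_left)
  finally show ?thesis unfolding energy_density_def by simp
qed

lemma mean_eq: assumes q: "q \<in> U"
  shows "mean_curv X nu q = (\<Sum>a\<in>UNIV. S a a q)"
proof -
  have "(\<Sum>a\<in>UNIV. S a a q) = (\<Sum>a\<in>UNIV. \<Sum>k\<in>UNIV. \<Sum>l\<in>UNIV. gi q k l * (pd l nu q $ a * pd k X q $ a))"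
    by (simp add: S_up[OF q] up_comp mult_ac)
  also have "\<dots> = (\<Sum>k\<in>UNIV. \<Sum>l\<in>UNIV. gi q k l * (pd l nu q \<bullet> pd k X q))"
    by (subst sum.swap, rule sum.cong[OF refl], subst sum.swap) (simp add: inner_vec_def sum_distrib_left)
  also have "\<dots> = (\<Sum>l\<in>UNIV. \<Sum>k\<in>UNIV. gi q l k * (pd l nu q \<bullet> pd k X q))"
    by (subst sum.swap) (simp add: gi_sym[OF q, of _ l for l])
  finally show ?thesis unfolding mean_curv_def by simp
qed

lemma tang_eq: assumes q: "q \<in> U"
  shows "tangential_part X T q \<bullet> grad_fun X E q = (\<Sum>d\<in>UNIV. T $ d * D d E q)"
proof -
  have g: "grad_fun X E q = grad E q" unfolding grad_fun_def grad_def up_def ..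
  have t: "tangential_part X T q = T - (T \<bullet> nu q) *\<^sub>R nu q"
    using tangent_decomp[OF q, of T] unfolding tangential_part_def by (simp add: algebra_simps)
  have "tangential_part X T q \<bullet> grad_fun X E q = T \<bullet> grad E q"
    unfolding g t using up_nu[OF q] by (simp add: inner_diff_left grad_def inner_commute[of "nu q"])
  then show ?thesis by (simp add: inner_vec_def D_def)
qed

lemma sff_comp: assumes q: "q \<in> U"
  shows "sff_map X nu q i j $ c = hess_fun X (\<lambda>q. nu q $ c) q i j
     - (\<Sum>c'\<in>UNIV. hess_fun X (\<lambda>q. nu q $ c') q i j * nu q $ c') * nu q $ c"
proof -
  define w where "w = pd i (pd j nu) q"
  have hc: "hess_fun X (\<lambda>q. nu q $ c) q i j = w $ c - (\<Sum>k\<in>UNIV. christoffel X q k i j * pd k nu q $ c)" for c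
    unfolding hess_fun_def w_def
    by (simp add: pd_pd_component[OF U smooth_su2[OF U nus] q] pd_component[OF smooth_da[OF U nus q]])
  have "(\<Sum>c'\<in>UNIV. hess_fun X (\<lambda>q. nu q $ c') q i j * nu q $ c') =
      w \<bullet> nu q - (\<Sum>k\<in>UNIV. christoffel X q k i j * (pd k nu q \<bullet> nu q))"
  proof -
    have "(\<Sum>c'\<in>UNIV. hess_fun X (\<lambda>q. nu q $ c') q i j * nu q $ c') =
        (\<Sum>c'\<in>UNIV. w $ c' * nu q $ c') - (\<Sum>c'\<in>UNIV. \<Sum>k\<in>UNIV. christoffel X q k i j * (pd k nu q $ c' * nu q $ c'))"
      unfolding hc by (simp add: sum_subtractf right_diff_distrib left_diff_distrib sum_distrib_left sum_distrib_right mult_ac)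
    also have "(\<Sum>c'\<in>UNIV. \<Sum>k\<in>UNIV. christoffel X q k i j * (pd k nu q $ c' * nu q $ c')) =
        (\<Sum>k\<in>UNIV. christoffel X q k i j * (pd k nu q \<bullet> nu q))"
      by (subst sum.swap) (simp add: inner_vec_def sum_distrib_left)
    finally show ?thesis by (simp add: inner_vec_def)
  qed
  also have "\<dots> = w \<bullet> nu q" by (simp add: nu_l_perp[OF q])
  finally have "(\<Sum>c'\<in>UNIV. hess_fun X (\<lambda>q. nu q $ c') q i j * nu q $ c') = w \<bullet> nu q" .
  then show ?thesis unfolding sff_map_def hc w_def Let_def by (simp add: sum_component)
qed


lemma sum5_swap:
  "(\<Sum>c\<in>A. \<Sum>i\<in>B. \<Sum>j\<in>C. \<Sum>k\<in>E. \<Sum>l\<in>F. G c i j k l) =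
   (\<Sum>i\<in>B. \<Sum>j\<in>C. \<Sum>k\<in>E. \<Sum>l\<in>F. \<Sum>c\<in>A. G c i j k l)"
proof -
  have "(\<Sum>c\<in>A. \<Sum>i\<in>B. \<Sum>j\<in>C. \<Sum>k\<in>E. \<Sum>l\<in>F. G c i j k l) =
      (\<Sum>i\<in>B. \<Sum>c\<in>A. \<Sum>j\<in>C. \<Sum>k\<in>E. \<Sum>l\<in>F. G c i j k l)" by (rule sum.swap)
  also have "\<dots> = (\<Sum>i\<in>B. \<Sum>j\<in>C. \<Sum>c\<in>A. \<Sum>k\<in>E. \<Sum>l\<in>F. G c i j k l)"
    by (rule sum.cong[OF refl], rule sum.swap)
  also have "\<dots> = (\<Sum>i\<in>B. \<Sum>j\<in>C. \<Sum>k\<in>E. \<Sum>c\<in>A. \<Sum>l\<in>F. G c i j k l)"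
    by (rule sum.cong[OF refl], rule sum.cong[OF refl], rule sum.swap)
  also have "\<dots> = (\<Sum>i\<in>B. \<Sum>j\<in>C. \<Sum>k\<in>E. \<Sum>l\<in>F. \<Sum>c\<in>A. G c i j k l)"
    by (rule sum.cong[OF refl], rule sum.cong[OF refl], rule sum.cong[OF refl], rule sum.swap)
  finally show ?thesis .
qed

definition Hh :: "real^'n \<Rightarrow> 'm \<Rightarrow> 'm \<Rightarrow> 'm \<Rightarrow> real" where
  "Hh q a b c = up2 q (hess_fun X (\<lambda>q. nu q $ c) q) a b"

lemma sff_eq: assumes q: "q \<in> U"
  shows "sff_map_norm2 X nu q = (\<Sum>a\<in>UNIV. \<Sum>b\<in>UNIV. \<Sum>c\<in>UNIV.
     (Hh q a b c - (\<Sum>c'\<in>UNIV. Hh q a b c' * nu q $ c') * nu q $ c) *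
     (Hh q a b c - (\<Sum>c'\<in>UNIV. Hh q a b c' * nu q $ c') * nu q $ c))"
proof -
  define W where "W c i j = sff_map X nu q i j $ c" for c i j
  have upW: "up2 q (W c) a b = Hh q a b c - (\<Sum>c'\<in>UNIV. Hh q a b c' * nu q $ c') * nu q $ c" for a b c
  proof -
    have "W c = (\<lambda>i j. hess_fun X (\<lambda>q. nu q $ c) q i j
        - (\<Sum>c'\<in>UNIV. hess_fun X (\<lambda>q. nu q $ c') q i j * nu q $ c') * nu q $ c)"
      by (intro ext) (simp add: W_def sff_comp[OF q])
    then have "up2 q (W c) a b = up2 q (hess_fun X (\<lambda>q. nu q $ c) q) a b
        - up2 q (\<lambda>i j. \<Sum>c'\<in>UNIV. hess_fun X (\<lambda>q. nu q $ c') q i j * nu q $ c') a b * nu q $ c"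
      by (simp add: up2_diff up2_scale)
    also have "up2 q (\<lambda>i j. \<Sum>c'\<in>UNIV. hess_fun X (\<lambda>q. nu q $ c') q i j * nu q $ c') a b =
        (\<Sum>c'\<in>UNIV. Hh q a b c' * nu q $ c')"
      by (simp add: up2_sum up2_scale Hh_def)
    finally show ?thesis by (simp add: Hh_def)
  qed
  have "sff_map_norm2 X nu q = (\<Sum>i\<in>UNIV. \<Sum>j\<in>UNIV. \<Sum>k\<in>UNIV. \<Sum>l\<in>UNIV. \<Sum>c\<in>UNIV.
       gi q i k * gi q j l * W c i j * W c k l)"
    unfolding sff_map_norm2_def W_def by (simp add: inner_vec_def sum_distrib_left mult_ac)
  also have "\<dots> = (\<Sum>c\<in>UNIV. \<Sum>i\<in>UNIV. \<Sum>j\<in>UNIV. \<Sum>k\<in>UNIV. \<Sum>l\<in>UNIV.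
       gi q i k * gi q j l * W c i j * W c k l)"
    by (rule sum5_swap[symmetric])
  also have "\<dots> = (\<Sum>c\<in>UNIV. \<Sum>a\<in>UNIV. \<Sum>b\<in>UNIV. up2 q (W c) a b * up2 q (W c) a b)"
    by (simp add: up2_inner[OF q])
  also have "\<dots> = (\<Sum>a\<in>UNIV. \<Sum>b\<in>UNIV. \<Sum>c\<in>UNIV. up2 q (W c) a b * up2 q (W c) a b)"
    by (subst sum.swap, rule sum.cong[OF refl], rule sum.swap)
  finally show ?thesis by (simp add: upW)
qed

lemma Hh_eq: assumes q: "q \<in> U"
  shows "Hh q a b c = D a (S b c) q + nu q $ b * (\<Sum>d\<in>UNIV. S a d q * S d c q)"
proof -
  have Sb: "S b c = D b (\<lambda>q. nu q $ c)" by (simp add: S_def[abs_def])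
  have Sd: "D d (\<lambda>q. nu q $ c) q = S d c q" for d by (simp add: S_def)
  show ?thesis unfolding Hh_def Sb using hess_conv[OF smooth_nuc q, of a b c] by (simp add: Sd)
qed

end


context hs
begin

definition Cf :: "'m \<Rightarrow> 'm \<Rightarrow> 'm \<Rightarrow> real^'n \<Rightarrow> real" where "Cf a b c = D a (S b c)"
definition S2 :: "'m \<Rightarrow> 'm \<Rightarrow> real^'n \<Rightarrow> real" where "S2 x y q = (\<Sum>d\<in>UNIV. S x d q * S d y q)"
definition Ef :: "real^'n \<Rightarrow> real" where "Ef q = (\<Sum>a\<in>UNIV. \<Sum>c\<in>UNIV. S a c q * S a c q)"
definition Hf :: "real^'n \<Rightarrow> real" where "Hf q = (\<Sum>a\<in>UNIV. S a a q)"

lemma smooth_Cf: "smooth_on U (Cf a b c)"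
  unfolding Cf_def by (intro smooth_D smooth_S)

lemma smooth_SS: "smooth_on U (\<lambda>q. S a b q * S c d q)"
  by (intro smooth_mult[OF U] smooth_S)

lemma smooth_S2: "smooth_on U (S2 a b)"
  unfolding S2_def[abs_def] by (intro smooth_sum[OF U] smooth_SS) auto

lemma smooth_Ef: "smooth_on U Ef"
  unfolding Ef_def[abs_def] by (intro smooth_sum[OF U] smooth_SS) auto

lemma smooth_Hf: "smooth_on U Hf"
  unfolding Hf_def[abs_def] by (intro smooth_sum[OF U] smooth_S) auto

lemma D_nuc: "D a (\<lambda>q. nu q $ b) q = S a b q"
  by (simp add: S_def)

lemma S_fun: "S b c = D b (\<lambda>q. nu q $ c)"
  by (simp add: S_def[abs_def])

lemma C_sym: assumes q: "q \<in> U" shows "Cf a b c q = Cf a c b q"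
  unfolding Cf_def by (rule D_local[OF _ q]) (use S_sym in auto)

lemma nuC: assumes q: "q \<in> U" shows "(\<Sum>b\<in>UNIV. nu q $ b * Cf a b c q) = - S2 a c q"
proof -
  have "D a (\<lambda>y. \<Sum>b\<in>UNIV. nu y $ b * S b c y) q = D a (\<lambda>y. 0) q"
    by (rule D_local[OF _ q]) (use nu_S in auto)
  also have "\<dots> = 0" by (rule D_const)
  finally have "(\<Sum>b\<in>UNIV. D a (\<lambda>y. nu y $ b * S b c y) q) = 0"
    using D_sum[of UNIV "\<lambda>b y. nu y $ b * S b c y" q a] q
    by (simp add: smooth_mult[OF U] smooth_nuc smooth_S)
  then have "(\<Sum>b\<in>UNIV. S a b q * S b c q + nu q $ b * Cf a b c q) = 0"
    by (simp add: D_mult[OF smooth_nuc smooth_S q] D_nuc Cf_def)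
  then show ?thesis by (simp add: sum.distrib S2_def)
qed

lemma codazzi: assumes q: "q \<in> U"
  shows "Cf a b c q - Cf b a c q = nu q $ a * S2 b c q - nu q $ b * S2 a c q"
  using comm_D[OF smooth_nuc q, of a b c] by (simp add: Cf_def S_fun[symmetric] D_nuc S2_def)

lemma codazzi': assumes q: "q \<in> U"
  shows "Cf a b c q = Cf b a c q + nu q $ a * S2 b c q - nu q $ b * S2 a c q"
  using codazzi[OF q, of a b c] by simp

lemma nuS2: assumes q: "q \<in> U" shows "(\<Sum>a\<in>UNIV. nu q $ a * S2 c a q) = 0"
proof -
  have "(\<Sum>a\<in>UNIV. nu q $ a * S2 c a q) = (\<Sum>d\<in>UNIV. S c d q * (\<Sum>a\<in>UNIV. S d a q * nu q $ a))"
    unfolding S2_def by (simp add: sum_distrib_left sum_distrib_right mult_ac) (rule sum.swap)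
  then show ?thesis by (simp add: S_nu[OF q])
qed

lemma trace_C: assumes q: "q \<in> U" shows "(\<Sum>a\<in>UNIV. Cf a a c q) = D c Hf q - nu q $ c * Ef q"
proof -
  have "(\<Sum>a\<in>UNIV. Cf a a c q) = (\<Sum>a\<in>UNIV. Cf a c a q)" by (simp add: C_sym[OF q])
  also have "\<dots> = (\<Sum>a\<in>UNIV. Cf c a a q + nu q $ a * S2 c a q - nu q $ c * S2 a a q)"
    by (rule sum.cong[OF refl]) (rule codazzi'[OF q])
  also have "\<dots> = (\<Sum>a\<in>UNIV. Cf c a a q) + (\<Sum>a\<in>UNIV. nu q $ a * S2 c a q) - nu q $ c * (\<Sum>a\<in>UNIV. S2 a a q)"
    by (simp add: sum.distrib sum_subtractf sum_distrib_left)
  also have "(\<Sum>a\<in>UNIV. Cf c a a q) = D c Hf q"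
    unfolding Hf_def[abs_def] Cf_def using D_sum[of UNIV "\<lambda>a. S a a" q c] q smooth_S by simp
  also have "(\<Sum>a\<in>UNIV. S2 a a q) = Ef q" unfolding S2_def Ef_def by (simp add: S_sym[OF q, of _ a for a])
  finally show ?thesis by (simp add: nuS2[OF q])
qed

lemma dE: assumes q: "q \<in> U" shows "D a Ef q = 2 * (\<Sum>b\<in>UNIV. \<Sum>c\<in>UNIV. S b c q * Cf a b c q)"
proof -
  have "D a Ef q = (\<Sum>b\<in>UNIV. D a (\<lambda>y. \<Sum>c\<in>UNIV. S b c y * S b c y) q)"
    unfolding Ef_def[abs_def] using D_sum[of UNIV "\<lambda>b y. \<Sum>c\<in>UNIV. S b c y * S b c y" q a] q
    by (simp add: smooth_sum[OF U] smooth_SS)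
  also have "\<dots> = (\<Sum>b\<in>UNIV. \<Sum>c\<in>UNIV. D a (\<lambda>y. S b c y * S b c y) q)"
    using D_sum[of UNIV "\<lambda>c y. S b c y * S b c y" q a for b] q by (simp add: smooth_SS)
  also have "\<dots> = (\<Sum>b\<in>UNIV. \<Sum>c\<in>UNIV. 2 * (S b c q * Cf a b c q))"
    by (simp add: D_mult[OF smooth_S smooth_S q] Cf_def)
  finally show ?thesis by (simp add: sum_distrib_left)
qed

lemma dH: assumes sol: "\<forall>q\<in>U. T \<bullet> nu q = - mean_curv X nu q" and q: "q \<in> U"
  shows "D c Hf q = - (\<Sum>d\<in>UNIV. T $ d * S c d q)"
proof -
  have "D c Hf q = D c (\<lambda>y. - (\<Sum>d\<in>UNIV. T $ d * nu y $ d)) q"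
    by (rule D_local[OF _ q]) (use sol mean_eq in \<open>auto simp: Hf_def inner_vec_def\<close>)
  also have "\<dots> = - (\<Sum>d\<in>UNIV. D c (\<lambda>y. T $ d * nu y $ d) q)"
    using D_minus[of "\<lambda>y. \<Sum>d\<in>UNIV. T $ d * nu y $ d" q c] D_sum[of UNIV "\<lambda>d y. T $ d * nu y $ d" q c] q
    by (simp add: smooth_sum[OF U] smooth_mult[OF U] smooth_const[OF U] smooth_nuc)
  also have "\<dots> = - (\<Sum>d\<in>UNIV. T $ d * S c d q)"
    by (simp add: D_cmult[OF smooth_nuc q] D_nuc)
  finally show ?thesis .
qed

end


lemma swap_in2: "(\<Sum>a\<in>A. \<Sum>b\<in>B. \<Sum>c\<in>C. F a b c) = (\<Sum>a\<in>A. \<Sum>c\<in>C. \<Sum>b\<in>B. F a b c)"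
  by (rule sum.cong[OF refl], rule sum.swap)

lemma sff_alg:
  fixes n :: "'m::finite \<Rightarrow> real" and Rq :: "'m \<Rightarrow> 'm \<Rightarrow> real" and C :: "'m \<Rightarrow> 'm \<Rightarrow> 'm \<Rightarrow> real"
  assumes nuC: "\<And>a c. (\<Sum>b\<in>UNIV. n b * C a b c) = - Rq a c"
    and Csym: "\<And>a b c. C a b c = C a c b"
    and nuS2: "\<And>c. (\<Sum>a\<in>UNIV. n a * Rq c a) = 0"
    and nn: "(\<Sum>a\<in>UNIV. n a * n a) = 1"
  shows "(\<Sum>a\<in>UNIV. \<Sum>b\<in>UNIV. \<Sum>c\<in>UNIV. (C a b c + n b * Rq a c + Rq a b * n c) * (C a b c + n b * Rq a c + Rq a b * n c))
    = (\<Sum>a\<in>UNIV. \<Sum>b\<in>UNIV. \<Sum>c\<in>UNIV. C a b c * C a b c) - 2 * (\<Sum>a\<in>UNIV. \<Sum>c\<in>UNIV. Rq a c * Rq a c)"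
proof -
  define Q where "Q = (\<Sum>a\<in>UNIV. \<Sum>c\<in>UNIV. Rq a c * Rq a c)"
  have nuC': "\<And>a b. (\<Sum>c\<in>UNIV. C a b c * n c) = - Rq a b"
    using nuC by (simp add: Csym[of _ _ b for b] mult.commute)
  have exp: "\<And>x y z::real. (x + y + z) * (x + y + z) = x * x + y * y + z * z + 2 * (x * y) + 2 * (x * z) + 2 * (y * z)"
    by (simp add: algebra_simps)
  have sxy: "(\<Sum>a\<in>UNIV. \<Sum>b\<in>UNIV. \<Sum>c\<in>UNIV. C a b c * (n b * Rq a c)) = - Q"
  proof -
    have "(\<Sum>a\<in>UNIV. \<Sum>b\<in>UNIV. \<Sum>c\<in>UNIV. C a b c * (n b * Rq a c)) =
        (\<Sum>a\<in>UNIV. \<Sum>c\<in>UNIV. Rq a c * (\<Sum>b\<in>UNIV. n b * C a b c))"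
      by (subst swap_in2) (simp add: sum_distrib_left mult_ac)
    also have "\<dots> = - Q" by (simp add: nuC Q_def sum_negf)
    finally show ?thesis .
  qed
  have sxz: "(\<Sum>a\<in>UNIV. \<Sum>b\<in>UNIV. \<Sum>c\<in>UNIV. C a b c * (Rq a b * n c)) = - Q"
  proof -
    have "(\<Sum>a\<in>UNIV. \<Sum>b\<in>UNIV. \<Sum>c\<in>UNIV. C a b c * (Rq a b * n c)) =
        (\<Sum>a\<in>UNIV. \<Sum>b\<in>UNIV. Rq a b * (\<Sum>c\<in>UNIV. C a b c * n c))"
      by (simp add: sum_distrib_left mult_ac)
    also have "\<dots> = - Q" by (simp add: nuC' Q_def sum_negf)
    finally show ?thesis .
  qed
  have syy: "(\<Sum>a\<in>UNIV. \<Sum>b\<in>UNIV. \<Sum>c\<in>UNIV. (n b * Rq a c) * (n b * Rq a c)) = Q"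
  proof -
    have "(\<Sum>a\<in>UNIV. \<Sum>b\<in>UNIV. \<Sum>c\<in>UNIV. (n b * Rq a c) * (n b * Rq a c)) =
        (\<Sum>a\<in>UNIV. \<Sum>c\<in>UNIV. \<Sum>b\<in>UNIV. (Rq a c * Rq a c) * (n b * n b))"
      by (subst swap_in2) (simp add: mult_ac)
    also have "\<dots> = (\<Sum>a\<in>UNIV. \<Sum>c\<in>UNIV. (Rq a c * Rq a c) * (\<Sum>b\<in>UNIV. n b * n b))"
      by (simp only: sum_distrib_left)
    also have "\<dots> = Q" by (simp add: nn Q_def)
    finally show ?thesis .
  qed
  have szz: "(\<Sum>a\<in>UNIV. \<Sum>b\<in>UNIV. \<Sum>c\<in>UNIV. (Rq a b * n c) * (Rq a b * n c)) = Q"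
  proof -
    have "(\<Sum>a\<in>UNIV. \<Sum>b\<in>UNIV. \<Sum>c\<in>UNIV. (Rq a b * n c) * (Rq a b * n c)) =
        (\<Sum>a\<in>UNIV. \<Sum>b\<in>UNIV. (Rq a b * Rq a b) * (\<Sum>c\<in>UNIV. n c * n c))"
      by (simp add: sum_distrib_left mult_ac)
    also have "\<dots> = Q" by (simp add: nn Q_def)
    finally show ?thesis .
  qed
  have syz: "(\<Sum>a\<in>UNIV. \<Sum>b\<in>UNIV. \<Sum>c\<in>UNIV. (n b * Rq a c) * (Rq a b * n c)) = 0"
  proof -
    have "(\<Sum>a\<in>UNIV. \<Sum>b\<in>UNIV. \<Sum>c\<in>UNIV. (n b * Rq a c) * (Rq a b * n c)) =
        (\<Sum>a\<in>UNIV. (\<Sum>b\<in>UNIV. n b * Rq a b) * (\<Sum>c\<in>UNIV. n c * Rq a c))"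
      by (simp add: sum_distrib_left sum_distrib_right mult_ac)
    also have "\<dots> = 0" by (simp add: nuS2)
    finally show ?thesis .
  qed
  show ?thesis
    unfolding exp sum.distrib sum_distrib_left[symmetric] sxy sxz syy szz syz Q_def[symmetric]
    by simp
qed


lemma lap_alg:
  fixes n T DE Y Z :: "'m::finite \<Rightarrow> real" and s Rq :: "'m \<Rightarrow> 'm \<Rightarrow> real"
    and C DC :: "'m \<Rightarrow> 'm \<Rightarrow> 'm \<Rightarrow> real" and E H :: real
  assumes ssym: "\<And>a b. s a b = s b a"
    and snu: "\<And>a. (\<Sum>c\<in>UNIV. s a c * n c) = 0"
    and cod: "\<And>a b c. C a b c = C b a c + n a * Rq b c - n b * Rq a c"
    and Csym: "\<And>a b c. C a b c = C a c b"
    and nuC: "\<And>a c. (\<Sum>b\<in>UNIV. n b * C a b c) = - Rq a c"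
    and S2def: "\<And>a b. Rq a b = (\<Sum>d\<in>UNIV. s a d * s d b)"
    and Edef: "E = (\<Sum>a\<in>UNIV. \<Sum>c\<in>UNIV. s a c * s a c)"
    and TH: "(\<Sum>d\<in>UNIV. T d * n d) = - H"
    and DEdef: "\<And>d. DE d = 2 * (\<Sum>b\<in>UNIV. \<Sum>c\<in>UNIV. s b c * C d b c)"
    and L: "\<And>b c. (\<Sum>a\<in>UNIV. DC a b c) = - (\<Sum>d\<in>UNIV. T d * C b c d) - s b c * E
        + (\<Sum>d\<in>UNIV. s b d * (\<Sum>a\<in>UNIV. n a * C d a c)) + H * Rq b c - (\<Sum>a\<in>UNIV. s a b * Rq a c)
        + n b * Y c + n c * Z b"
  shows "(\<Sum>a\<in>UNIV. 2 * (\<Sum>b\<in>UNIV. \<Sum>c\<in>UNIV. C a b c * C a b c + s b c * DC a b c))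
    = 2 * (\<Sum>a\<in>UNIV. \<Sum>b\<in>UNIV. \<Sum>c\<in>UNIV. C a b c * C a b c) - (\<Sum>d\<in>UNIV. T d * DE d)
      - 2 * (E * E) - 4 * (\<Sum>a\<in>UNIV. \<Sum>c\<in>UNIV. Rq a c * Rq a c)"
proof -
  define Q where "Q = (\<Sum>a\<in>UNIV. \<Sum>c\<in>UNIV. Rq a c * Rq a c)"
  define SS2 where "SS2 = (\<Sum>b\<in>UNIV. \<Sum>c\<in>UNIV. s b c * Rq b c)"
  define CC where "CC = (\<Sum>a\<in>UNIV. \<Sum>b\<in>UNIV. \<Sum>c\<in>UNIV. C a b c * C a b c)"
  define TD where "TD = (\<Sum>d\<in>UNIV. T d * DE d)"
  have nus: "(\<Sum>b\<in>UNIV. n b * s b c) = 0" for c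
  proof -
    have "(\<Sum>b\<in>UNIV. n b * s b c) = (\<Sum>b\<in>UNIV. s c b * n b)"
      by (rule sum.cong[OF refl]) (metis ssym mult.commute)
    then show ?thesis using snu by simp
  qed
  have ssS2: "(\<Sum>b\<in>UNIV. s b d * s b c) = Rq d c" for d c
    unfolding S2def by (rule sum.cong[OF refl]) (metis ssym)
  have k1: "(\<Sum>b\<in>UNIV. \<Sum>c\<in>UNIV. s b c * (\<Sum>d\<in>UNIV. s b d * (\<Sum>a\<in>UNIV. n a * C d a c))) = - Q"
  proof -
    have "(\<Sum>b\<in>UNIV. \<Sum>c\<in>UNIV. s b c * (\<Sum>d\<in>UNIV. s b d * (\<Sum>a\<in>UNIV. n a * C d a c)))
        = (\<Sum>b\<in>UNIV. \<Sum>c\<in>UNIV. \<Sum>d\<in>UNIV. (s b d * s b c) * (- Rq d c))"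
      by (simp add: nuC sum_distrib_left mult_ac)
    also have "\<dots> = (\<Sum>c\<in>UNIV. \<Sum>d\<in>UNIV. \<Sum>b\<in>UNIV. (s b d * s b c) * (- Rq d c))"
      by (subst sum.swap, rule sum.cong[OF refl], rule sum.swap)
    also have "\<dots> = (\<Sum>c\<in>UNIV. \<Sum>d\<in>UNIV. Rq d c * (- Rq d c))"
      by (simp only: sum_distrib_right[symmetric] ssS2)
    also have "\<dots> = - Q" unfolding Q_def by (subst sum.swap) (simp add: sum_negf)
    finally show ?thesis .
  qed
  have k2: "(\<Sum>b\<in>UNIV. \<Sum>c\<in>UNIV. s b c * (\<Sum>a\<in>UNIV. s a b * Rq a c)) = Q"
  proof -
    have "(\<Sum>b\<in>UNIV. \<Sum>c\<in>UNIV. s b c * (\<Sum>a\<in>UNIV. s a b * Rq a c))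
        = (\<Sum>b\<in>UNIV. \<Sum>c\<in>UNIV. \<Sum>a\<in>UNIV. (s b a * s b c) * Rq a c)"
      by (simp add: sum_distrib_left ssym[of _ b for b] mult_ac)
    also have "\<dots> = (\<Sum>c\<in>UNIV. \<Sum>a\<in>UNIV. \<Sum>b\<in>UNIV. (s b a * s b c) * Rq a c)"
      by (subst sum.swap, rule sum.cong[OF refl], rule sum.swap)
    also have "\<dots> = (\<Sum>c\<in>UNIV. \<Sum>a\<in>UNIV. Rq a c * Rq a c)"
      by (simp only: sum_distrib_right[symmetric] ssS2)
    also have "\<dots> = Q" unfolding Q_def by (rule sum.swap)
    finally show ?thesis .
  qed
  have k3: "(\<Sum>b\<in>UNIV. \<Sum>c\<in>UNIV. s b c * (n b * Y c + n c * Z b)) = 0"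
  proof -
    have "(\<Sum>b\<in>UNIV. \<Sum>c\<in>UNIV. s b c * (n b * Y c + n c * Z b))
       = (\<Sum>c\<in>UNIV. Y c * (\<Sum>b\<in>UNIV. n b * s b c)) + (\<Sum>b\<in>UNIV. Z b * (\<Sum>c\<in>UNIV. s b c * n c))"
      by (simp add: sum.distrib distrib_left sum_distrib_left mult_ac) (rule sum.swap)
    then show ?thesis by (simp add: nus snu)
  qed
  have k4: "(\<Sum>b\<in>UNIV. \<Sum>c\<in>UNIV. s b c * (\<Sum>d\<in>UNIV. T d * C b c d)) = TD / 2 + H * SS2"
  proof -
    have eqC: "\<And>b c d. C b c d = C d b c + n b * Rq d c - n d * Rq b c"
      using Csym cod by metis
    have "(\<Sum>b\<in>UNIV. \<Sum>c\<in>UNIV. s b c * (\<Sum>d\<in>UNIV. T d * C b c d))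
      = (\<Sum>b\<in>UNIV. \<Sum>c\<in>UNIV. \<Sum>d\<in>UNIV. s b c * (T d * C b c d))"
      by (simp only: sum_distrib_left)
    also have "\<dots> = (\<Sum>b\<in>UNIV. \<Sum>c\<in>UNIV. \<Sum>d\<in>UNIV. T d * (s b c * C d b c) + T d * (Rq d c * (n b * s b c)) - (T d * n d) * (s b c * Rq b c))"
      by (intro sum.cong refl) (subst eqC, simp add: algebra_simps)
    also have "\<dots> = (\<Sum>b\<in>UNIV. \<Sum>c\<in>UNIV. \<Sum>d\<in>UNIV. T d * (s b c * C d b c))
        + (\<Sum>b\<in>UNIV. \<Sum>c\<in>UNIV. \<Sum>d\<in>UNIV. T d * (Rq d c * (n b * s b c)))
        - (\<Sum>b\<in>UNIV. \<Sum>c\<in>UNIV. \<Sum>d\<in>UNIV. (T d * n d) * (s b c * Rq b c))"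
      by (simp only: sum.distrib sum_subtractf)
    also have "(\<Sum>b\<in>UNIV. \<Sum>c\<in>UNIV. \<Sum>d\<in>UNIV. T d * (s b c * C d b c)) = TD / 2"
    proof -
      have "(\<Sum>b\<in>UNIV. \<Sum>c\<in>UNIV. \<Sum>d\<in>UNIV. T d * (s b c * C d b c))
          = (\<Sum>d\<in>UNIV. \<Sum>b\<in>UNIV. \<Sum>c\<in>UNIV. T d * (s b c * C d b c))"
        by (subst (2) sum.swap, rule sum.cong[OF refl], rule sum.swap)
      also have "\<dots> = (\<Sum>d\<in>UNIV. T d * (\<Sum>b\<in>UNIV. \<Sum>c\<in>UNIV. s b c * C d b c))"
        by (simp only: sum_distrib_left)
      also have "\<dots> = TD / 2" by (simp add: TD_def DEdef sum_divide_distrib)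
      finally show ?thesis .
    qed
    also have "(\<Sum>b\<in>UNIV. \<Sum>c\<in>UNIV. \<Sum>d\<in>UNIV. T d * (Rq d c * (n b * s b c))) = 0"
    proof -
      have "(\<Sum>b\<in>UNIV. \<Sum>c\<in>UNIV. \<Sum>d\<in>UNIV. T d * (Rq d c * (n b * s b c)))
          = (\<Sum>c\<in>UNIV. \<Sum>d\<in>UNIV. \<Sum>b\<in>UNIV. T d * (Rq d c * (n b * s b c)))"
        by (subst sum.swap, rule sum.cong[OF refl], rule sum.swap)
      also have "\<dots> = (\<Sum>c\<in>UNIV. \<Sum>d\<in>UNIV. T d * (Rq d c * (\<Sum>b\<in>UNIV. n b * s b c)))"
        by (simp only: sum_distrib_left)
      also have "\<dots> = 0" by (simp add: nus)
      finally show ?thesis .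
    qed
    also have "(\<Sum>b\<in>UNIV. \<Sum>c\<in>UNIV. \<Sum>d\<in>UNIV. (T d * n d) * (s b c * Rq b c)) = - H * SS2"
      by (simp only: sum_distrib_right[symmetric] TH SS2_def sum_distrib_left[symmetric])
    finally show ?thesis by simp
  qed
  have k5: "(\<Sum>b\<in>UNIV. \<Sum>c\<in>UNIV. s b c * (s b c * E)) = E * E"
    by (simp add: Edef sum_distrib_right mult_ac)
  have "(\<Sum>a\<in>UNIV. 2 * (\<Sum>b\<in>UNIV. \<Sum>c\<in>UNIV. C a b c * C a b c + s b c * DC a b c))
     = 2 * CC + 2 * (\<Sum>b\<in>UNIV. \<Sum>c\<in>UNIV. s b c * (\<Sum>a\<in>UNIV. DC a b c))"
  proof -
    have "(\<Sum>a\<in>UNIV. \<Sum>b\<in>UNIV. \<Sum>c\<in>UNIV. s b c * DC a b c) = (\<Sum>b\<in>UNIV. \<Sum>c\<in>UNIV. s b c * (\<Sum>a\<in>UNIV. DC a b c))"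
      by (simp add: sum_distrib_left) (subst sum.swap, rule sum.cong[OF refl], rule sum.swap)
    then show ?thesis by (simp add: sum.distrib CC_def sum_distrib_left[symmetric])
  qed
  also have "(\<Sum>b\<in>UNIV. \<Sum>c\<in>UNIV. s b c * (\<Sum>a\<in>UNIV. DC a b c)) =
      (\<Sum>b\<in>UNIV. \<Sum>c\<in>UNIV. - (s b c * (\<Sum>d\<in>UNIV. T d * C b c d)) - s b c * (s b c * E)
      + s b c * (\<Sum>d\<in>UNIV. s b d * (\<Sum>a\<in>UNIV. n a * C d a c)) + H * (s b c * Rq b c)
      - s b c * (\<Sum>a\<in>UNIV. s a b * Rq a c) + s b c * (n b * Y c + n c * Z b))"
    by (intro sum.cong refl) (simp only: L, simp add: algebra_simps)
  also have "\<dots> = - (\<Sum>b\<in>UNIV. \<Sum>c\<in>UNIV. s b c * (\<Sum>d\<in>UNIV. T d * C b c d))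
      - (\<Sum>b\<in>UNIV. \<Sum>c\<in>UNIV. s b c * (s b c * E))
      + (\<Sum>b\<in>UNIV. \<Sum>c\<in>UNIV. s b c * (\<Sum>d\<in>UNIV. s b d * (\<Sum>a\<in>UNIV. n a * C d a c)))
      + H * SS2
      - (\<Sum>b\<in>UNIV. \<Sum>c\<in>UNIV. s b c * (\<Sum>a\<in>UNIV. s a b * Rq a c))
      + (\<Sum>b\<in>UNIV. \<Sum>c\<in>UNIV. s b c * (n b * Y c + n c * Z b))"
    by (simp only: sum.distrib sum_subtractf sum_negf SS2_def sum_distrib_left)
  also have "\<dots> = - (TD / 2) - E * E - 2 * Q" unfolding k1 k2 k3 k4 k5 by simp
  finally show ?thesis unfolding CC_def[symmetric] TD_def[symmetric] Q_def[symmetric] by simp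
qed


context hs
begin

lemma lap_local: assumes "\<forall>y\<in>U. f y = g y" "q \<in> U"
  shows "laplacian X f q = laplacian X g q"
proof -
  have 1: "\<forall>y\<in>U. pd j f y = pd j g y" for j using smooth_pd_local[OF U assms(1)] by blast
  have 2: "pd i (pd j f) q = pd i (pd j g) q" for i j by (rule smooth_pd_local[OF U 1 assms(2)])
  show ?thesis unfolding laplacian_def hess_fun_def using 1 assms(2) by (simp add: 2)
qed

lemma DS_C: "D a (S b c) q = Cf a b c q"
  by (simp add: Cf_def)

lemma D_Ef2: assumes q: "q \<in> U"
  shows "D a (D a Ef) q = 2 * (\<Sum>b\<in>UNIV. \<Sum>c\<in>UNIV. Cf a b c q * Cf a b c q + S b c q * D a (Cf a b c) q)"
proof -
  have "D a (D a Ef) q = D a (\<lambda>y. 2 * (\<Sum>b\<in>UNIV. \<Sum>c\<in>UNIV. S b c y * Cf a b c y)) q"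
    by (rule D_local[OF _ q]) (use dE in auto)
  also have "\<dots> = 2 * (\<Sum>b\<in>UNIV. \<Sum>c\<in>UNIV. D a (\<lambda>y. S b c y * Cf a b c y) q)"
  proof -
    have sm: "smooth_on U (\<lambda>y. S b c y * Cf a b c y)" for b c by (intro smooth_mult[OF U] smooth_S smooth_Cf)
    have "D a (\<lambda>y. 2 * (\<Sum>b\<in>UNIV. \<Sum>c\<in>UNIV. S b c y * Cf a b c y)) q = 2 * D a (\<lambda>y. \<Sum>b\<in>UNIV. \<Sum>c\<in>UNIV. S b c y * Cf a b c y) q"
      by (rule D_cmult[OF _ q]) (intro smooth_sum[OF U] sm; simp)
    also have "D a (\<lambda>y. \<Sum>b\<in>UNIV. \<Sum>c\<in>UNIV. S b c y * Cf a b c y) q = (\<Sum>b\<in>UNIV. D a (\<lambda>y. \<Sum>c\<in>UNIV. S b c y * Cf a b c y) q)"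
      by (rule D_sum[OF _ _ q]) (auto intro!: smooth_sum[OF U] sm)
    also have "\<dots> = (\<Sum>b\<in>UNIV. \<Sum>c\<in>UNIV. D a (\<lambda>y. S b c y * Cf a b c y) q)"
      by (intro sum.cong refl D_sum[OF _ _ q]) (auto intro!: sm)
    finally show ?thesis .
  qed
  also have "\<dots> = 2 * (\<Sum>b\<in>UNIV. \<Sum>c\<in>UNIV. Cf a b c q * Cf a b c q + S b c q * D a (Cf a b c) q)"
    by (simp only: D_mult[OF smooth_S smooth_Cf q] DS_C)
  finally show ?thesis .
qed

lemma DC_a: assumes q: "q \<in> U"
  shows "D a (Cf a b c) q = D b (Cf a a c) q + nu q $ a * (\<Sum>d\<in>UNIV. S b d q * Cf d a c q)
     - nu q $ b * (\<Sum>d\<in>UNIV. S a d q * Cf d a c q)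
     + S a a q * S2 b c q + nu q $ a * D a (S2 b c) q - (S a b q * S2 a c q + nu q $ b * D a (S2 a c) q)"
proof -
  have "D a (Cf a b c) q = D a (\<lambda>y. (Cf b a c y + nu y $ a * S2 b c y) - nu y $ b * S2 a c y) q"
    by (rule D_local[OF _ q]) (use codazzi' in blast)
  also have "\<dots> = D a (Cf b a c) q + (S a a q * S2 b c q + nu q $ a * D a (S2 b c) q)
       - (S a b q * S2 a c q + nu q $ b * D a (S2 a c) q)"
  proof -
    have s1: "smooth_on U (\<lambda>y. nu y $ a * S2 b c y)" by (intro smooth_mult[OF U] smooth_nuc smooth_S2)
    have s2: "smooth_on U (\<lambda>y. nu y $ b * S2 a c y)" by (intro smooth_mult[OF U] smooth_nuc smooth_S2)
    have s3: "smooth_on U (\<lambda>y. Cf b a c y + nu y $ a * S2 b c y)" by (intro smooth_add[OF U] smooth_Cf s1)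
    have "D a (\<lambda>y. (Cf b a c y + nu y $ a * S2 b c y) - nu y $ b * S2 a c y) q
        = D a (\<lambda>y. Cf b a c y + nu y $ a * S2 b c y) q - D a (\<lambda>y. nu y $ b * S2 a c y) q"
      by (rule D_diff[OF s3 s2 q])
    also have "D a (\<lambda>y. Cf b a c y + nu y $ a * S2 b c y) q = D a (Cf b a c) q + D a (\<lambda>y. nu y $ a * S2 b c y) q"
      by (rule D_add[OF smooth_Cf s1 q])
    also have "D a (\<lambda>y. nu y $ a * S2 b c y) q = S a a q * S2 b c q + nu q $ a * D a (S2 b c) q"
      by (simp only: D_mult[OF smooth_nuc smooth_S2 q] D_nuc)
    also have "D a (\<lambda>y. nu y $ b * S2 a c y) q = S a b q * S2 a c q + nu q $ b * D a (S2 a c) q"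
      by (simp only: D_mult[OF smooth_nuc smooth_S2 q] D_nuc)
    finally show ?thesis .
  qed
  also have "D a (Cf b a c) q = D b (Cf a a c) q + nu q $ a * (\<Sum>d\<in>UNIV. S b d q * Cf d a c q)
     - nu q $ b * (\<Sum>d\<in>UNIV. S a d q * Cf d a c q)"
    using comm_D[OF smooth_S q, of a b a c] by (simp only: DS_C Cf_def[of b a c, symmetric] Cf_def[of a a c, symmetric])
  finally show ?thesis by simp
qed


lemma sumDC: assumes sol: "\<forall>q\<in>U. T \<bullet> nu q = - mean_curv X nu q" and q: "q \<in> U"
  shows "(\<Sum>a\<in>UNIV. D a (Cf a b c) q) = - (\<Sum>d\<in>UNIV. T $ d * Cf b c d q) - S b c q * Ef q
     + (\<Sum>d\<in>UNIV. S b d q * (\<Sum>a\<in>UNIV. nu q $ a * Cf d a c q)) + Hf q * S2 b c q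
     - (\<Sum>a\<in>UNIV. S a b q * S2 a c q)
     + nu q $ b * (- (\<Sum>a\<in>UNIV. \<Sum>d\<in>UNIV. S a d q * Cf d a c q) - (\<Sum>a\<in>UNIV. D a (S2 a c) q))
     + nu q $ c * (- D b Ef q)"
proof -
  have p1: "(\<Sum>a\<in>UNIV. D b (Cf a a c) q) = - (\<Sum>d\<in>UNIV. T $ d * Cf b c d q) - (S b c q * Ef q + nu q $ c * D b Ef q)"
  proof -
    have "(\<Sum>a\<in>UNIV. D b (Cf a a c) q) = D b (\<lambda>y. \<Sum>a\<in>UNIV. Cf a a c y) q"
      by (rule D_sum[OF _ _ q, symmetric]) (auto intro: smooth_Cf)
    also have "\<dots> = D b (\<lambda>y. D c Hf y - nu y $ c * Ef y) q"
      by (rule D_local[OF _ q]) (use trace_C in auto)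
    also have "\<dots> = D b (D c Hf) q - (S b c q * Ef q + nu q $ c * D b Ef q)"
      by (simp only: D_diff[OF smooth_D[OF smooth_Hf] smooth_mult[OF U smooth_nuc smooth_Ef] q]
          D_mult[OF smooth_nuc smooth_Ef q] D_nuc)
    also have "D b (D c Hf) q = D b (\<lambda>y. - (\<Sum>d\<in>UNIV. T $ d * S c d y)) q"
      by (rule D_local[OF _ q]) (use dH[OF sol] in auto)
    also have "\<dots> = - (\<Sum>d\<in>UNIV. D b (\<lambda>y. T $ d * S c d y) q)"
    proof -
      have sm: "smooth_on U (\<lambda>y. T $ d * S c d y)" for d by (rule smooth_mult[OF U smooth_const[OF U] smooth_S])
      have "D b (\<lambda>y. - (\<Sum>d\<in>UNIV. T $ d * S c d y)) q = - D b (\<lambda>y. \<Sum>d\<in>UNIV. T $ d * S c d y) q"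
        by (rule D_minus[OF _ q]) (intro smooth_sum[OF U] sm; simp)
      also have "D b (\<lambda>y. \<Sum>d\<in>UNIV. T $ d * S c d y) q = (\<Sum>d\<in>UNIV. D b (\<lambda>y. T $ d * S c d y) q)"
        by (rule D_sum[OF _ _ q]) (auto intro: sm)
      finally show ?thesis .
    qed
    also have "\<dots> = - (\<Sum>d\<in>UNIV. T $ d * Cf b c d q)"
      by (simp only: D_cmult[OF smooth_S q] DS_C)
    finally show ?thesis .
  qed
  have p2: "(\<Sum>a\<in>UNIV. nu q $ a * (\<Sum>d\<in>UNIV. S b d q * Cf d a c q)) = (\<Sum>d\<in>UNIV. S b d q * (\<Sum>a\<in>UNIV. nu q $ a * Cf d a c q))"
    by (simp only: sum_distrib_left mult.left_commute[of "nu q $ _"]) (rule sum.swap)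
  have p3: "(\<Sum>a\<in>UNIV. S a a q * S2 b c q) = Hf q * S2 b c q"
    by (simp only: Hf_def sum_distrib_right)
  have p4: "(\<Sum>a\<in>UNIV. nu q $ a * D a (S2 b c) q) = 0" by (rule D_nu[OF q])
  have "(\<Sum>a\<in>UNIV. D a (Cf a b c) q) = (\<Sum>a\<in>UNIV. D b (Cf a a c) q)
     + (\<Sum>a\<in>UNIV. nu q $ a * (\<Sum>d\<in>UNIV. S b d q * Cf d a c q))
     - nu q $ b * (\<Sum>a\<in>UNIV. \<Sum>d\<in>UNIV. S a d q * Cf d a c q)
     + (\<Sum>a\<in>UNIV. S a a q * S2 b c q) + (\<Sum>a\<in>UNIV. nu q $ a * D a (S2 b c) q)
     - ((\<Sum>a\<in>UNIV. S a b q * S2 a c q) + nu q $ b * (\<Sum>a\<in>UNIV. D a (S2 a c) q))"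
    by (simp only: DC_a[OF q] sum.distrib sum_subtractf sum_distrib_left)
  also have "\<dots> = - (\<Sum>d\<in>UNIV. T $ d * Cf b c d q) - S b c q * Ef q
     + (\<Sum>d\<in>UNIV. S b d q * (\<Sum>a\<in>UNIV. nu q $ a * Cf d a c q)) + Hf q * S2 b c q
     - (\<Sum>a\<in>UNIV. S a b q * S2 a c q)
     + nu q $ b * (- (\<Sum>a\<in>UNIV. \<Sum>d\<in>UNIV. S a d q * Cf d a c q) - (\<Sum>a\<in>UNIV. D a (S2 a c) q))
     + nu q $ c * (- D b Ef q)"
    unfolding p1 p2 p3 p4 by (simp add: algebra_simps)
  finally show ?thesis .
qed

lemma main_lap: assumes sol: "\<forall>q\<in>U. T \<bullet> nu q = - mean_curv X nu q" and p: "p \<in> U"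
  shows "laplacian X Ef p = 2 * (\<Sum>a\<in>UNIV. \<Sum>b\<in>UNIV. \<Sum>c\<in>UNIV. Cf a b c p * Cf a b c p)
     - (\<Sum>d\<in>UNIV. T $ d * D d Ef p) - 2 * (Ef p * Ef p) - 4 * (\<Sum>a\<in>UNIV. \<Sum>c\<in>UNIV. S2 a c p * S2 a c p)"
proof -
  have TH: "(\<Sum>d\<in>UNIV. T $ d * nu p $ d) = - Hf p"
    using sol p mean_eq[OF p] by (simp add: inner_vec_def Hf_def)
  show ?thesis
    unfolding lap_D[OF smooth_Ef p] D_Ef2[OF p]
    by (rule lap_alg[where n="\<lambda>a. nu p $ a" and s="\<lambda>a b. S a b p" and Rq="\<lambda>a b. S2 a b p"
        and C="\<lambda>a b c. Cf a b c p" and DC="\<lambda>a b c. D a (Cf a b c) p" and E="Ef p" and H="Hf p"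
        and T="\<lambda>d. T $ d" and DE="\<lambda>d. D d Ef p"
        and Y="\<lambda>c. - (\<Sum>a\<in>UNIV. \<Sum>d\<in>UNIV. S a d p * Cf d a c p) - (\<Sum>a\<in>UNIV. D a (S2 a c) p)"
        and Z="\<lambda>b. - D b Ef p"])
      (rule S_sym[OF p], rule S_nu[OF p], rule codazzi'[OF p], rule C_sym[OF p], rule nuC[OF p],
       rule S2_def, rule Ef_def, rule TH, rule dE[OF p], rule sumDC[OF sol p])
qed

end


context hs
begin

lemma sff_final: assumes p: "p \<in> U"
  shows "sff_map_norm2 X nu p = (\<Sum>a\<in>UNIV. \<Sum>b\<in>UNIV. \<Sum>c\<in>UNIV. Cf a b c p * Cf a b c p)
     - 2 * (\<Sum>a\<in>UNIV. \<Sum>c\<in>UNIV. S2 a c p * S2 a c p)"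
proof -
  have hh: "Hh p a b c = Cf a b c p + nu p $ b * S2 a c p" for a b c
    by (simp add: Hh_eq[OF p] DS_C S2_def)
  have nC: "(\<Sum>c'\<in>UNIV. Cf a b c' p * nu p $ c') = - S2 a b p" for a b
  proof -
    have "(\<Sum>c'\<in>UNIV. Cf a b c' p * nu p $ c') = (\<Sum>c'\<in>UNIV. nu p $ c' * Cf a c' b p)"
      by (rule sum.cong[OF refl]) (simp add: C_sym[OF p, of a b] mult.commute)
    then show ?thesis by (simp add: nuC[OF p])
  qed
  have nS: "(\<Sum>c'\<in>UNIV. S2 a c' p * nu p $ c') = 0" for a
    using nuS2[OF p, of a] by (simp add: mult.commute)
  have hs: "(\<Sum>c'\<in>UNIV. Hh p a b c' * nu p $ c') = - S2 a b p" for a b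
  proof -
    have "(\<Sum>c'\<in>UNIV. Hh p a b c' * nu p $ c') = (\<Sum>c'\<in>UNIV. Cf a b c' p * nu p $ c') + nu p $ b * (\<Sum>c'\<in>UNIV. S2 a c' p * nu p $ c')"
      by (simp add: hh algebra_simps sum.distrib sum_distrib_left)
    then show ?thesis by (simp add: nC nS)
  qed
  have W: "Hh p a b c - (\<Sum>c'\<in>UNIV. Hh p a b c' * nu p $ c') * nu p $ c = Cf a b c p + nu p $ b * S2 a c p + S2 a b p * nu p $ c" for a b c
    by (simp only: hs) (simp add: hh)
  have nn: "(\<Sum>a\<in>UNIV. nu p $ a * nu p $ a) = 1" using nunu[OF p] by (simp add: inner_vec_def)
  show ?thesis
    unfolding sff_eq[OF p] W
    by (rule sff_alg[where n="\<lambda>a. nu p $ a" and Rq="\<lambda>a b. S2 a b p" and C="\<lambda>a b c. Cf a b c p"])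
      (rule nuC[OF p], rule C_sym[OF p], rule nuS2[OF p], rule nn)
qed

end

theorem lemma2p2:
  fixes X :: "real^'n \<Rightarrow> real^'m" and nu :: "real^'n \<Rightarrow> real^'m"
    and U :: "(real^'n) set" and T :: "real^'m"
  assumes dim: "CARD('n) \<ge> 2" "CARD('m) = CARD('n) + 1"
    and U: "open U"
    and X_smooth: "smooth_on U X"
    and immersion: "\<forall>p\<in>U. inj (frechet_derivative X (at p))"
    and nu_smooth: "smooth_on U nu"
    and nu_unit: "\<forall>p\<in>U. norm (nu p) = 1"
    and nu_normal: "\<forall>p\<in>U. \<forall>i. nu p \<bullet> pd i X p = 0"
    and soliton: "\<forall>p\<in>U. T \<bullet> nu p = - mean_curv X nu p"
    and p: "p \<in> U"
  shows "laplacian X (energy_density X nu) p =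
           2 * sff_map_norm2 X nu p - 2 * (energy_density X nu p)^2
           - tangential_part X T p \<bullet> grad_fun X (energy_density X nu) p"
proof -
  interpret hs X nu U
    by unfold_locales (use dim U X_smooth immersion nu_smooth nu_unit nu_normal in auto)
  have Eeq: "\<forall>y\<in>U. energy_density X nu y = Ef y" using energy_eq by (simp add: Ef_def)
  have l: "laplacian X (energy_density X nu) p = laplacian X Ef p" by (rule lap_local[OF Eeq p])
  have t: "tangential_part X T p \<bullet> grad_fun X (energy_density X nu) p = (\<Sum>d\<in>UNIV. T $ d * D d Ef p)"
    using tang_eq[OF p, of T "energy_density X nu"] D_local[OF Eeq p] by simp
  have e: "energy_density X nu p = Ef p" using Eeq p by simp
  show ?thesis unfolding l t e sff_final[OF p] main_lap[OF soliton p] by (simp add: power2_eq_square)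
qed


end
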